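(* For $n\ge1$ and $l\in\{1,\dots,n\}$ let $X_{n,l}$ be the depth of the node containing $l$ in the random binary search tree built from a uniformly random permutation of $\{1,\dots,n\}$. Then $$\sup_{l\in\{1,\dots,n\}} d_{\mathrm{TV}}\big(\mathcal{L}(X_{n,l}),\ \mathrm{Po}(E X_{n,l})\big)\le \frac{28+\pi^2}{\log n}\qquad\text{for all } n\ge 2.$$
   Context: Random binary search tree: given a permutation $(\pi(1),\dots,\pi(n))$ of $\{1,\dots,n\}$, the keys are inserted in order $\pi(1),\pi(2),\dots$; $\pi(1)$ is the root, and each subsequent key moves left if smaller and right if larger than the current node's key, starting at the root, until it reaches an empty position where it is placed. The permutation is uniform over all $n!$ permutations. The depth of a node is its number of edges from the root. $\mathcal{L}(X)$ denotes the distribution of $X$. For probability measures $\mu,\nu$ on $\mathbb{N}_0$, $d_{\mathrm{TV}}(\mu,\nu)=\sup_{A\subset\mathbb{N}_0}|\mu(A)-\nu(A)|=\frac12\sum_{k\ge0}|\mu(\{k\})-\nu(\{k\})|$. $\mathrm{Po}(\lambda)$ is the Poisson distribution with mean $\lambda$, with $\mathrm{Po}(0)=\delta_0$. $\log$ is the natural logarithm. *)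

theory Defs
  imports "HOL-Probability.Probability" "HOL-Combinatorics.Multiset_Permutations" "HOL-Library.Tree"
begin

fun bst_insert :: "nat \<Rightarrow> nat tree \<Rightarrow> nat tree" where
  "bst_insert x Leaf = Node Leaf x Leaf"
| "bst_insert x (Node l a r) =
     (if x < a then Node (bst_insert x l) a r
      else if a < x then Node l a (bst_insert x r)
      else Node l a r)"

definition bst_of_list :: "nat list \<Rightarrow> nat tree" where
  "bst_of_list xs = fold bst_insert xs Leaf"

(* Depth (number of edges from the root) of the node containing key x
   (only meaningful when x occurs in the tree). *)
fun key_depth :: "nat \<Rightarrow> nat tree \<Rightarrow> nat" where
  "key_depth x Leaf = 0"
| "key_depth x (Node l a r) =
     (if x = a then 0 else if x < a then Suc (key_depth x l) else Suc (key_depth x r))"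

definition depth_law :: "nat \<Rightarrow> nat \<Rightarrow> nat pmf" where
  "depth_law n l = map_pmf (\<lambda>xs. key_depth l (bst_of_list xs))
                      (pmf_of_set (permutations_of_set {1..n}))"

(* Poisson probabilities with mean lam \<ge> 0; Po(0) = delta_0 since 0^0 = 1. *)
definition po :: "real \<Rightarrow> nat \<Rightarrow> real" where
  "po lam k = lam ^ k / fact k * exp (- lam)"

definition dTV :: "nat pmf \<Rightarrow> (nat \<Rightarrow> real) \<Rightarrow> real" where
  "dTV p q = (1/2) * (\<Sum>k. \<bar>pmf p k - q k\<bar>)"

end

theory Submission
  imports Defs "HOL-Analysis.Harmonic_Numbers"
begin


fun repl :: "('a \<Rightarrow> bool) \<Rightarrow> 'a list \<Rightarrow> 'a list \<Rightarrow> 'a list" where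
  "repl Q [] es = []"
| "repl Q (x#xs) es = (if Q x then hd es # repl Q xs (tl es) else x # repl Q xs es)"

lemma repl_filter:
  "length es = length (filter Q xs) \<Longrightarrow> \<forall>e\<in>set es. Q e \<Longrightarrow> filter Q (repl Q xs es) = es"
  by (induction xs arbitrary: es) (auto simp: length_Suc_conv)

lemma repl_filter_not:
  "length es = length (filter Q xs) \<Longrightarrow> \<forall>e\<in>set es. Q e \<Longrightarrow>
   filter (\<lambda>y. \<not> Q y) (repl Q xs es) = filter (\<lambda>y. \<not> Q y) xs"
  by (induction xs arbitrary: es) (auto simp: length_Suc_conv)

lemma repl_self: "repl Q xs (filter Q xs) = xs"
  by (induction xs) auto

lemma repl_repl:
  "length es = length (filter Q xs) \<Longrightarrow> \<forall>e\<in>set es. Q e \<Longrightarrow> repl Q (repl Q xs es) es' = repl Q xs es'"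
  by (induction xs arbitrary: es es') (auto simp: length_Suc_conv)

lemma repl_map:
  "length es = length (filter Q xs) \<Longrightarrow> \<forall>e\<in>set es. Q e \<Longrightarrow> map Q (repl Q xs es) = map Q xs"
  by (induction xs arbitrary: es) (auto simp: length_Suc_conv)

lemma repl_length: "length (repl Q xs es) = length xs"
  by (induction xs arbitrary: es) auto

lemma repl_mset:
  "length es = length (filter Q xs) \<Longrightarrow> \<forall>e\<in>set es. Q e \<Longrightarrow>
   mset (repl Q xs es) = mset (filter (\<lambda>y. \<not> Q y) xs) + mset es"
  by (induction xs arbitrary: es) (auto simp: length_Suc_conv)

lemma find_filter: "(\<And>x. P x \<Longrightarrow> Q x) \<Longrightarrow> find P (filter Q xs) = find P xs"
  by (induction xs) auto

lemma find_remove1: "\<not> P x \<Longrightarrow> find P (remove1 x xs) = find P xs"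
  by (induction xs) auto

lemma find_conv_filter: "find P xs = (case filter P xs of [] \<Rightarrow> None | y # _ \<Rightarrow> Some y)"
  by (induction xs) auto

lemma find_far:
  assumes "length xs = length ys" "map Q xs = map Q ys"
    "filter (\<lambda>y. \<not> Q y) xs = filter (\<lambda>y. \<not> Q y) ys" "\<And>x. Q x \<Longrightarrow> K x" "\<not> Q k"
  shows "find K xs = Some k \<longleftrightarrow> find K ys = Some k"
  using assms
proof (induction xs ys rule: list_induct2)
  case Nil
  then show ?case by simp
next
  case (Cons x xs y ys)
  show ?case
  proof (cases "Q x")
    case True
    then have "Q y" using Cons.prems by simp
    then show ?thesis using True Cons.prems by auto
  next
    case False
    then have "\<not> Q y" using Cons.prems by simp
    then have "x = y" using False Cons.prems by simp
    then show ?thesis using Cons False \<open>\<not> Q y\<close> by auto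
  qed
qed

lemma find_other:
  assumes "length xs = length ys" "map Q xs = map Q ys"
    "filter (\<lambda>y. \<not> Q y) xs = filter (\<lambda>y. \<not> Q y) ys" "\<And>x. Q x \<Longrightarrow> K x \<Longrightarrow> x = l" "\<not> Q k"
    "\<forall>i. l \<in> set (take i (filter Q ys)) \<longrightarrow> l \<in> set (take i (filter Q xs))"
    "find K xs = Some k" "K l"
  shows "find K ys = Some k"
  using assms
proof (induction xs ys rule: list_induct2)
  case Nil
  then show ?case by simp
next
  case (Cons x xs y ys)
  show ?case
  proof (cases "Q x")
    case True
    then have Qy: "Q y" using Cons.prems by simp
    have "x \<noteq> k" using True Cons.prems by auto
    then have nKx: "\<not> K x" using Cons.prems(6) by (auto split: if_splits)
    have nKy: "\<not> K y"
    proof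
      assume "K y"
      then have "y = l" using Qy Cons.prems by auto
      then have "l \<in> set (take 1 (filter Q (y#ys)))" using Qy by simp
      then have "l \<in> set (take 1 (filter Q (x#xs)))" using Cons.prems(5) by blast
      then have "x = l" using True by simp
      then show False using nKx \<open>K y\<close> \<open>y = l\<close> by simp
    qed
    have IHp: "\<forall>i. l \<in> set (take i (filter Q ys)) \<longrightarrow> l \<in> set (take i (filter Q xs))"
    proof (intro allI impI)
      fix i assume "l \<in> set (take i (filter Q ys))"
      then have "l \<in> set (take (Suc i) (filter Q (y#ys)))" using Qy by simp
      then have "l \<in> set (take (Suc i) (filter Q (x#xs)))" using Cons.prems(5) by blast
      then have "l = x \<or> l \<in> set (take i (filter Q xs))" using True by simp
      moreover have "l \<noteq> x" using nKx Cons.prems(7) by auto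
      ultimately show "l \<in> set (take i (filter Q xs))" by blast
    qed
    show ?thesis using Cons.IH[OF _ _ Cons.prems(3,4) IHp] Cons.prems nKx nKy True Qy by simp
  next
    case False
    then have "\<not> Q y" using Cons.prems by simp
    then have "x = y" using False Cons.prems by simp
    then show ?thesis using Cons False \<open>\<not> Q y\<close> by (auto split: if_splits)
  qed
qed


lemma perm_mset: "finite A \<Longrightarrow> xs \<in> permutations_of_set A \<longleftrightarrow> mset xs = mset_set A"
  by (simp add: permutations_of_set_altdef permutations_of_multiset_def)

lemma perm_filter:
  assumes "xs \<in> permutations_of_set A" "S \<subseteq> A"
  shows "distinct (filter (\<lambda>y. y \<in> S) xs)" "set (filter (\<lambda>y. y \<in> S) xs) = S"
    "length (filter (\<lambda>y. y \<in> S) xs) = card S"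
proof -
  show d: "distinct (filter (\<lambda>y. y \<in> S) xs)" using assms by (simp add: permutations_of_set_def)
  show s: "set (filter (\<lambda>y. y \<in> S) xs) = S" using assms by (auto simp: permutations_of_set_def)
  show "length (filter (\<lambda>y. y \<in> S) xs) = card S" using distinct_card[OF d] s by simp
qed

definition psi :: "'a set \<Rightarrow> 'a \<Rightarrow> 'a list \<Rightarrow> 'a list" where
  "psi S x xs = repl (\<lambda>y. y \<in> S) xs (x # remove1 x (filter (\<lambda>y. y \<in> S) xs))"

definition psinv :: "'a set \<Rightarrow> 'a \<Rightarrow> nat \<Rightarrow> 'a list \<Rightarrow> 'a list" where
  "psinv S x r ys = repl (\<lambda>y. y \<in> S) ys
     (take r (tl (filter (\<lambda>y. y \<in> S) ys)) @ x # drop r (tl (filter (\<lambda>y. y \<in> S) ys)))"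

fun idx :: "'a list \<Rightarrow> 'a \<Rightarrow> nat" where
  "idx [] x = 0"
| "idx (y#ys) x = (if y = x then 0 else Suc (idx ys x))"

lemma idx_less: "x \<in> set xs \<Longrightarrow> idx xs x < length xs"
  by (induction xs) auto

lemma idx_append: "idx (xs @ ys) x = (if x \<in> set xs then idx xs x else length xs + idx ys x)"
  by (induction xs) auto

lemma len_remove1_Suc: "x \<in> set e \<Longrightarrow> Suc (length (remove1 x e)) = length e"
  by (induction e) auto

lemma mset_filter_partition: "mset (filter (\<lambda>y. \<not> Q y) xs) + mset (filter Q xs) = mset xs"
  by (induction xs) auto

lemma ins_remove1:
  "distinct e \<Longrightarrow> x \<in> set e \<Longrightarrow> idx e x = r \<Longrightarrow> take r (remove1 x e) @ x # drop r (remove1 x e) = e"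
proof (induction e arbitrary: r)
  case Nil then show ?case by simp
next
  case (Cons y e)
  show ?case
  proof (cases "y = x")
    case True then show ?thesis using Cons.prems by auto
  next
    case False
    then obtain r' where "r = Suc r'" "idx e x = r'" using Cons.prems by auto
    then show ?thesis using Cons False by auto
  qed
qed

context
  fixes A S :: "'a set" and x :: 'a
  assumes finA: "finite A" and SA: "S \<subseteq> A" and xS: "x \<in> S"
begin

abbreviation "Q \<equiv> (\<lambda>y. y \<in> S)"
abbreviation "PP \<equiv> permutations_of_set A"

lemma psi_filter:
  assumes "xs \<in> PP"
  shows "filter Q (psi S x xs) = x # remove1 x (filter Q xs)"
proof -
  have xin: "x \<in> set (filter Q xs)" using perm_filter[OF assms SA] xS by simp
  then have "length (x # remove1 x (filter Q xs)) = length (filter Q xs)"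
    using len_remove1_Suc[OF xin] by simp
  then show ?thesis unfolding psi_def using xS by (intro repl_filter) (auto dest: subsetD[OF set_remove1_subset])
qed

lemma psi_props:
  assumes "xs \<in> PP"
  shows "length (psi S x xs) = length xs" "map Q (psi S x xs) = map Q xs"
    "filter (\<lambda>y. \<not> Q y) (psi S x xs) = filter (\<lambda>y. \<not> Q y) xs"
    "psi S x xs \<in> PP"
proof -
  have xin: "x \<in> set (filter Q xs)" using perm_filter[OF assms SA] xS by simp
  then have len: "length (x # remove1 x (filter Q xs)) = length (filter Q xs)"
    using len_remove1_Suc[OF xin] by simp
  have allQ: "\<forall>e\<in>set (x # remove1 x (filter Q xs)). Q e" using xS
    by (auto dest: subsetD[OF set_remove1_subset])
  show "length (psi S x xs) = length xs" by (simp add: psi_def repl_length)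
  show "map Q (psi S x xs) = map Q xs" unfolding psi_def by (rule repl_map[OF len allQ])
  show "filter (\<lambda>y. \<not> Q y) (psi S x xs) = filter (\<lambda>y. \<not> Q y) xs"
    unfolding psi_def by (rule repl_filter_not[OF len allQ])
  have "mset (psi S x xs) = mset (filter (\<lambda>y. \<not> Q y) xs) + mset (x # remove1 x (filter Q xs))"
    unfolding psi_def by (rule repl_mset[OF len allQ])
  also have "mset (x # remove1 x (filter Q xs)) = mset (filter Q xs)"
    using xin by simp
  also have "mset (filter (\<lambda>y. \<not> Q y) xs) + mset (filter Q xs) = mset xs"
    by (rule mset_filter_partition)
  finally show "psi S x xs \<in> PP" using assms finA by (simp add: perm_mset)
qed

definition Pr :: "nat \<Rightarrow> 'a list set" where
  "Pr r = {xs \<in> PP. idx (filter Q xs) x = r}"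

lemma psi_bij:
  assumes r: "r < card S"
  shows "bij_betw (psi S x) (Pr r) (Pr 0)"
proof (rule bij_betw_byWitness[where f' = "psinv S x r"])
  show "\<forall>a\<in>Pr r. psinv S x r (psi S x a) = a"
  proof
    fix xs assume xs: "xs \<in> Pr r"
    then have xP: "xs \<in> PP" and ix: "idx (filter Q xs) x = r" by (auto simp: Pr_def)
    note pf = perm_filter[OF xP SA]
    have xin: "x \<in> set (filter Q xs)" using pf xS by simp
    have len: "length (x # remove1 x (filter Q xs)) = length (filter Q xs)"
      using len_remove1_Suc[OF xin] by simp
    have allQ: "\<forall>e\<in>set (x # remove1 x (filter Q xs)). Q e" using xS
      by (auto dest: subsetD[OF set_remove1_subset])
    have "psinv S x r (psi S x xs) = repl Q (psi S x xs) (filter Q xs)"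
      unfolding psinv_def psi_filter[OF xP] using ins_remove1[OF pf(1) xin ix] by simp
    also have "\<dots> = repl Q xs (filter Q xs)"
      unfolding psi_def by (rule repl_repl[OF len allQ])
    finally show "psinv S x r (psi S x xs) = xs" by (simp add: repl_self)
  qed
  show "\<forall>a\<in>Pr 0. psi S x (psinv S x r a) = a"
  proof
    fix ys assume ys: "ys \<in> Pr 0"
    then have yP: "ys \<in> PP" and iy: "idx (filter Q ys) x = 0" by (auto simp: Pr_def)
    note pf = perm_filter[OF yP SA]
    have xin: "x \<in> set (filter Q ys)" using pf xS by simp
    obtain rest where fy: "filter Q ys = x # rest"
      using xin iy by (cases "filter Q ys") (auto split: if_splits)
    have xr: "x \<notin> set rest" using pf(1) fy by simp
    have rQ: "\<forall>e\<in>set rest. Q e" using pf(2) fy by auto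
    let ?e = "take r rest @ x # drop r rest"
    have len: "length ?e = length (filter Q ys)" using fy by simp
    have allQ: "\<forall>e\<in>set ?e. Q e" using rQ xS by (auto dest: in_set_takeD in_set_dropD)
    have pinv: "psinv S x r ys = repl Q ys ?e" by (simp add: psinv_def fy)
    have f2: "filter Q (psinv S x r ys) = ?e" unfolding pinv by (rule repl_filter[OF len allQ])
    have rm: "remove1 x ?e = rest"
      using xr by (simp add: remove1_append) (metis append_take_drop_id in_set_takeD)
    have "psi S x (psinv S x r ys) = repl Q (psinv S x r ys) (x # rest)"
      unfolding psi_def f2 rm ..
    also have "\<dots> = repl Q ys (x # rest)" unfolding pinv by (rule repl_repl[OF len allQ])
    finally show "psi S x (psinv S x r ys) = ys" using fy repl_self by metis
  qed
  show "psi S x ` Pr r \<subseteq> Pr 0"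
  proof
    fix z assume "z \<in> psi S x ` Pr r"
    then obtain xs where xs: "xs \<in> Pr r" "z = psi S x xs" by auto
    then have xP: "xs \<in> PP" by (simp add: Pr_def)
    show "z \<in> Pr 0" using psi_props(4)[OF xP] psi_filter[OF xP] xs by (simp add: Pr_def)
  qed
  show "psinv S x r ` Pr 0 \<subseteq> Pr r"
  proof
    fix z assume "z \<in> psinv S x r ` Pr 0"
    then obtain ys where ys: "ys \<in> Pr 0" "z = psinv S x r ys" by auto
    then have yP: "ys \<in> PP" and iy: "idx (filter Q ys) x = 0" by (auto simp: Pr_def)
    note pf = perm_filter[OF yP SA]
    have xin: "x \<in> set (filter Q ys)" using pf xS by simp
    obtain rest where fy: "filter Q ys = x # rest"
      using xin iy by (cases "filter Q ys") (auto split: if_splits)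
    have xr: "x \<notin> set rest" using pf(1) fy by simp
    have rQ: "\<forall>e\<in>set rest. Q e" using pf(2) fy by auto
    have lr: "length rest = card S - 1" using pf(3) fy by simp
    let ?e = "take r rest @ x # drop r rest"
    have len: "length ?e = length (filter Q ys)" using fy by simp
    have allQ: "\<forall>e\<in>set ?e. Q e" using rQ xS by (auto dest: in_set_takeD in_set_dropD)
    have pinv: "psinv S x r ys = repl Q ys ?e" by (simp add: psinv_def fy)
    have f2: "filter Q (psinv S x r ys) = ?e" unfolding pinv by (rule repl_filter[OF len allQ])
    have "x \<notin> set (take r rest)" using xr by (meson in_set_takeD)
    then have idx: "idx ?e x = r" using r lr by (simp add: idx_append)
    have "mset (psinv S x r ys) = mset (filter (\<lambda>y. \<not> Q y) ys) + mset ?e"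
      unfolding pinv by (rule repl_mset[OF len allQ])
    also have "mset ?e = mset (filter Q ys)" unfolding fy
      by (metis append_take_drop_id mset_append mset.simps(2) add_mset_add_single union_assoc union_commute)
    also have "mset (filter (\<lambda>y. \<not> Q y) ys) + mset (filter Q ys) = mset ys"
      by (rule mset_filter_partition)
    finally have "psinv S x r ys \<in> PP" using yP finA by (simp add: perm_mset)
    then show "z \<in> Pr r" using ys f2 idx by (simp add: Pr_def)
  qed
qed

lemma Pr0_eq: "Pr 0 = {ys \<in> PP. find Q ys = Some x}"
proof -
  have "idx (filter Q ys) x = 0 \<longleftrightarrow> find Q ys = Some x" if "ys \<in> PP" for ys
  proof -
    have "x \<in> set (filter Q ys)" using perm_filter[OF that SA] xS by simp
    then show ?thesis by (cases "filter Q ys") (auto simp: find_conv_filter)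
  qed
  then show ?thesis by (auto simp: Pr_def)
qed

lemma coupling_sum:
  fixes f :: "'a list \<Rightarrow> real"
  shows "(\<Sum>xs\<in>PP. f (psi S x xs)) = card S * (\<Sum>ys\<in>{ys \<in> PP. find Q ys = Some x}. f ys)"
proof -
  have idx: "(\<lambda>xs. idx (filter Q xs) x) ` PP \<subseteq> {..<card S}"
  proof
    fix i assume "i \<in> (\<lambda>xs. idx (filter Q xs) x) ` PP"
    then obtain xs where "xs \<in> PP" "i = idx (filter Q xs) x" by auto
    moreover have xin: "x \<in> set (filter Q xs)" using perm_filter(2)[OF \<open>xs \<in> PP\<close> SA] xS by simp
    ultimately show "i \<in> {..<card S}" using perm_filter(3)[OF \<open>xs \<in> PP\<close> SA] idx_less[OF xin] by simp
  qed
  have "(\<Sum>xs\<in>PP. f (psi S x xs)) = (\<Sum>r<card S. \<Sum>xs\<in>Pr r. f (psi S x xs))"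
    unfolding Pr_def by (rule sum.group[symmetric]) (use idx in auto)
  also have "\<dots> = (\<Sum>r<card S. \<Sum>ys\<in>Pr 0. f ys)"
    by (intro sum.cong refl sum.reindex_bij_betw psi_bij) simp
  also have "\<dots> = card S * (\<Sum>ys\<in>Pr 0. f ys)" by simp
  finally show ?thesis by (simp add: Pr0_eq)
qed

end


lemma find_Some_in: "find P xs = Some j \<Longrightarrow> j \<in> set xs \<and> P j"
  by (induction xs) (auto split: if_splits)

definition iv :: "nat \<Rightarrow> nat \<Rightarrow> nat set" where
  "iv l j = {min j l..max j l}"

definition anc :: "nat list \<Rightarrow> nat \<Rightarrow> nat \<Rightarrow> bool" where
  "anc xs l j \<longleftrightarrow> j \<noteq> l \<and> find (\<lambda>y. y \<in> iv l j) xs = Some j"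

lemma fold_ins_node:
  "fold bst_insert xs (Node L a R) =
   Node (fold bst_insert (filter (\<lambda>y. y < a) xs) L) a (fold bst_insert (filter (\<lambda>y. a < y) xs) R)"
  by (induction xs arbitrary: L R) auto

lemma bst_of_list_Cons:
  "bst_of_list (x # xs) = Node (bst_of_list (filter (\<lambda>y. y < x) xs)) x (bst_of_list (filter (\<lambda>y. x < y) xs))"
  by (simp add: bst_of_list_def fold_ins_node)

lemma depth_anc:
  "distinct xs \<Longrightarrow> l \<in> set xs \<Longrightarrow> key_depth l (bst_of_list xs) = card {j \<in> set xs. anc xs l j}"
proof (induction "length xs" arbitrary: xs rule: less_induct)
  case less
  then obtain x xs' where xs: "xs = x # xs'" by (cases xs) auto
  show ?case
  proof (cases "l = x")
    case True
    have "{j \<in> set xs. anc xs l j} = {}"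
      using True by (auto simp: anc_def xs iv_def)
    then show ?thesis using True xs by (simp add: bst_of_list_Cons)
  next
    case False
    show ?thesis
    proof (cases "l < x")
      case lx: True
      let ?ys = "filter (\<lambda>y. y < x) xs'"
      have ly: "l \<in> set ?ys" using less.prems lx False xs by auto
      have dy: "distinct ?ys" using less.prems xs by auto
      have IH: "key_depth l (bst_of_list ?ys) = card {j \<in> set ?ys. anc ?ys l j}"
        using less.hyps[OF _ dy ly] xs by (simp add: le_imp_less_Suc length_filter_le)
      have xnot: "x \<notin> set ?ys" by simp
      have eq: "{j \<in> set xs. anc xs l j} = insert x {j \<in> set ?ys. anc ?ys l j}"
      proof (intro set_eqI iffI)
        fix j assume j: "j \<in> {j \<in> set xs. anc xs l j}"
        show "j \<in> insert x {j \<in> set ?ys. anc ?ys l j}"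
        proof (cases "j = x")
          case True then show ?thesis by simp
        next
          case jx: False
          then have fj: "find (\<lambda>y. y \<in> iv l j) (x # xs') = Some j" "j \<noteq> l" "j \<in> set xs'"
            using j xs by (auto simp: anc_def)
          then have "x \<notin> iv l j" using jx by (auto split: if_splits)
          then have "j < x" using lx jx by (auto simp: iv_def)
          then have "\<And>y. y \<in> iv l j \<Longrightarrow> y < x" using lx by (auto simp: iv_def)
          then have "find (\<lambda>y. y \<in> iv l j) ?ys = Some j"
            using fj \<open>x \<notin> iv l j\<close> by (simp add: find_filter)
          then show ?thesis using \<open>j < x\<close> fj by (auto simp: anc_def)
        qed
      next
        fix j assume j: "j \<in> insert x {j \<in> set ?ys. anc ?ys l j}"
        show "j \<in> {j \<in> set xs. anc xs l j}"
        proof (cases "j = x")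
          case True
          then show ?thesis using False xs by (auto simp: anc_def iv_def)
        next
          case jx: False
          then have jy: "j \<in> set ?ys" "anc ?ys l j" using j by auto
          then have "j < x" by simp
          then have lt: "\<And>y. y \<in> iv l j \<Longrightarrow> y < x" using lx by (auto simp: iv_def)
          then have "x \<notin> iv l j" by blast
          then show ?thesis using jy lt xs by (auto simp: anc_def find_filter)
        qed
      qed
      have "key_depth l (bst_of_list xs) = Suc (key_depth l (bst_of_list ?ys))"
        using lx False xs by (simp add: bst_of_list_Cons)
      also have "\<dots> = card {j \<in> set xs. anc xs l j}"
        unfolding IH eq by (subst card_insert_disjoint) auto
      finally show ?thesis .
    next
      case lx: False
      then have lx: "x < l" using \<open>l \<noteq> x\<close> by simp
      let ?ys = "filter (\<lambda>y. x < y) xs'"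
      have ly: "l \<in> set ?ys" using less.prems lx False xs by auto
      have dy: "distinct ?ys" using less.prems xs by auto
      have IH: "key_depth l (bst_of_list ?ys) = card {j \<in> set ?ys. anc ?ys l j}"
        using less.hyps[OF _ dy ly] xs by (simp add: le_imp_less_Suc length_filter_le)
      have xnot: "x \<notin> set ?ys" by simp
      have eq: "{j \<in> set xs. anc xs l j} = insert x {j \<in> set ?ys. anc ?ys l j}"
      proof (intro set_eqI iffI)
        fix j assume j: "j \<in> {j \<in> set xs. anc xs l j}"
        show "j \<in> insert x {j \<in> set ?ys. anc ?ys l j}"
        proof (cases "j = x")
          case True then show ?thesis by simp
        next
          case jx: False
          then have fj: "find (\<lambda>y. y \<in> iv l j) (x # xs') = Some j" "j \<noteq> l" "j \<in> set xs'"
            using j xs by (auto simp: anc_def)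
          then have "x \<notin> iv l j" using jx by (auto split: if_splits)
          then have "x < j" using lx jx by (auto simp: iv_def)
          then have "\<And>y. y \<in> iv l j \<Longrightarrow> x < y" using lx by (auto simp: iv_def)
          then have "find (\<lambda>y. y \<in> iv l j) ?ys = Some j"
            using fj \<open>x \<notin> iv l j\<close> by (simp add: find_filter)
          then show ?thesis using \<open>x < j\<close> fj by (auto simp: anc_def)
        qed
      next
        fix j assume j: "j \<in> insert x {j \<in> set ?ys. anc ?ys l j}"
        show "j \<in> {j \<in> set xs. anc xs l j}"
        proof (cases "j = x")
          case True
          then show ?thesis using False xs by (auto simp: anc_def iv_def)
        next
          case jx: False
          then have jy: "j \<in> set ?ys" "anc ?ys l j" using j by auto
          then have "x < j" by simp
          then have lt: "\<And>y. y \<in> iv l j \<Longrightarrow> x < y" using lx by (auto simp: iv_def)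
          then have "x \<notin> iv l j" by blast
          then show ?thesis using jy lt xs by (auto simp: anc_def find_filter)
        qed
      qed
      have "key_depth l (bst_of_list xs) = Suc (key_depth l (bst_of_list ?ys))"
        using lx False xs by (simp add: bst_of_list_Cons)
      also have "\<dots> = card {j \<in> set xs. anc xs l j}"
        unfolding IH eq by (subst card_insert_disjoint) auto
      finally show ?thesis .
    qed
  qed
qed


lemma take_remove1_sub: "set (take m (remove1 x xs)) \<subseteq> set (take (Suc m) xs)"
proof (induction xs arbitrary: m)
  case Nil then show ?case by simp
next
  case (Cons y xs)
  then show ?case by (cases m) (auto simp: set_take_subset_set_take)
qed

lemma find_sub: "find P xs = Some m \<Longrightarrow> (\<And>y. R y \<Longrightarrow> P y) \<Longrightarrow> R m \<Longrightarrow> find R xs = Some m"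
  by (induction xs) (auto split: if_splits)

lemma iv_sub: "l \<in> {1..n} \<Longrightarrow> j \<in> {1..n} \<Longrightarrow> iv l j \<subseteq> {1..(n::nat)}"
  by (auto simp: iv_def)

lemma iv_mem: "j \<in> iv l j" "l \<in> iv l j"
  by (auto simp: iv_def)

lemma card_iv: "card (iv l j) = (if j \<le> l then l - j else j - l) + 1"
  by (auto simp: iv_def min_def max_def)

context
  fixes n l j :: nat and xs :: "nat list"
  assumes l: "l \<in> {1..n}" and j: "j \<in> {1..n}" and jl: "j \<noteq> l"
    and xs: "xs \<in> permutations_of_set {1..n}"
begin

abbreviation "ys \<equiv> psi (iv l j) j xs"

lemma psi_anc_self: "anc ys l j"
proof -
  have "filter (\<lambda>y. y \<in> iv l j) ys = j # remove1 j (filter (\<lambda>y. y \<in> iv l j) xs)"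
    by (rule psi_filter[OF _ iv_sub[OF l j] iv_mem(1) xs]) simp
  then show ?thesis using jl by (simp add: anc_def find_conv_filter)
qed

lemma psi_facts:
  "length ys = length xs" "map (\<lambda>y. y \<in> iv l j) ys = map (\<lambda>y. y \<in> iv l j) xs"
  "filter (\<lambda>y. \<not> y \<in> iv l j) ys = filter (\<lambda>y. \<not> y \<in> iv l j) xs"
  "filter (\<lambda>y. y \<in> iv l j) ys = j # remove1 j (filter (\<lambda>y. y \<in> iv l j) xs)"
  using psi_props[OF _ iv_sub[OF l j] iv_mem(1) xs] psi_filter[OF _ iv_sub[OF l j] iv_mem(1) xs]
  by auto

lemma psi_anc_same:
  assumes k: "k \<noteq> j" "k < l \<longleftrightarrow> j < l"
  shows "anc ys l k \<longleftrightarrow> anc xs l k"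
proof (cases "k = l")
  case True then show ?thesis by (simp add: anc_def)
next
  case kl: False
  let ?Q = "\<lambda>y. y \<in> iv l j" and ?K = "\<lambda>y. y \<in> iv l k"
  show ?thesis
  proof (cases "k \<in> iv l j")
    case True
    then have sub: "\<And>y. ?K y \<Longrightarrow> ?Q y" "\<not> ?K j" using k kl jl by (auto simp: iv_def)
    have "find ?K ys = find ?K (filter ?Q ys)" by (rule find_filter[symmetric]) (use sub in auto)
    also have "\<dots> = find ?K (remove1 j (filter ?Q xs))" using psi_facts(4) sub by simp
    also have "\<dots> = find ?K xs" using sub by (simp add: find_remove1 find_filter)
    finally show ?thesis by (simp add: anc_def)
  next
    case False
    then have sub: "\<And>y. ?Q y \<Longrightarrow> ?K y" using k kl jl by (auto simp: iv_def)
    have "find ?K xs = Some k \<longleftrightarrow> find ?K ys = Some k"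
      by (rule find_far[OF psi_facts(1)[symmetric] psi_facts(2)[symmetric] psi_facts(3)[symmetric] sub False])
    then show ?thesis by (auto simp: anc_def)
  qed
qed

lemma psi_anc_mono:
  assumes k: "k \<noteq> j" and a: "anc xs l k"
  shows "anc ys l k"
proof (cases "k < l \<longleftrightarrow> j < l")
  case True then show ?thesis using psi_anc_same k a by simp
next
  case False
  have kl: "k \<noteq> l" using a by (simp add: anc_def)
  let ?Q = "\<lambda>y. y \<in> iv l j" and ?K = "\<lambda>y. y \<in> iv l k"
  have h1: "\<And>y. ?Q y \<Longrightarrow> ?K y \<Longrightarrow> y = l" using False kl jl by (auto simp: iv_def)
  have h2: "\<not> ?Q k" using False kl jl by (auto simp: iv_def)
  have h3: "\<forall>i. l \<in> set (take i (filter ?Q ys)) \<longrightarrow> l \<in> set (take i (filter ?Q xs))"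
  proof (intro allI impI)
    fix i assume "l \<in> set (take i (filter ?Q ys))"
    then have "l \<in> set (take i (j # remove1 j (filter ?Q xs)))" using psi_facts(4) by simp
    then obtain i' where "i = Suc i'" "l \<in> set (take i' (remove1 j (filter ?Q xs)))"
      using jl by (cases i) auto
    then show "l \<in> set (take i (filter ?Q xs))" using take_remove1_sub[of i' j "filter ?Q xs"] by auto
  qed
  have "find ?K ys = Some k"
    by (rule find_other[OF psi_facts(1)[symmetric] psi_facts(2)[symmetric] psi_facts(3)[symmetric] h1 h2 h3])
      (use a in \<open>auto simp: anc_def iv_def\<close>)
  then show ?thesis using kl by (simp add: anc_def)
qed

end


definition steng :: "real \<Rightarrow> (nat \<Rightarrow> real) \<Rightarrow> nat \<Rightarrow> real" where
  "steng lam h k = (if k = 0 then 0 else fact (k - 1) / lam ^ k * (\<Sum>i<k. lam ^ i / fact i * h i))"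

lemma steng_eq:
  assumes "lam > 0"
  shows "lam * steng lam h (Suc k) - real k * steng lam h k = h k"
proof (cases k)
  case 0
  then show ?thesis using assms by (simp add: steng_def)
next
  case (Suc m)
  have fk: "fact k = real k * fact m" using Suc by simp
  have "lam * steng lam h (Suc k) = fact k / lam ^ k * (\<Sum>i<Suc k. lam ^ i / fact i * h i)"
    using assms by (simp add: steng_def)
  also have "\<dots> = fact k / lam ^ k * (\<Sum>i<k. lam ^ i / fact i * h i) + h k"
    using assms by (simp add: field_simps)
  also have "fact k / lam ^ k * (\<Sum>i<k. lam ^ i / fact i * h i) = real k * steng lam h k"
    using Suc fk by (simp add: steng_def)
  finally show ?thesis by simp
qed

definition stT :: "real \<Rightarrow> nat \<Rightarrow> real" where
  "stT lam k = fact (k - 1) / lam ^ k * (\<Sum>i<k. lam ^ i / fact i)"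

lemma stT_nonneg: "lam > 0 \<Longrightarrow> stT lam k \<ge> 0"
  by (simp add: stT_def sum_nonneg)

lemma steng_le_T:
  assumes "lam > 0" "\<And>i. \<bar>h i\<bar> \<le> 1"
  shows "\<bar>steng lam h k\<bar> \<le> stT lam k"
proof -
  have "\<bar>\<Sum>i<k. lam ^ i / fact i * h i\<bar> \<le> (\<Sum>i<k. lam ^ i / fact i)"
  proof -
    have "\<bar>\<Sum>i<k. lam ^ i / fact i * h i\<bar> \<le> (\<Sum>i<k. \<bar>lam ^ i / fact i * h i\<bar>)" by (rule sum_abs)
    also have "\<dots> \<le> (\<Sum>i<k. lam ^ i / fact i)"
    proof (rule sum_mono)
      fix i
      have "\<bar>lam ^ i / fact i * h i\<bar> = lam ^ i / fact i * \<bar>h i\<bar>" using assms(1) by (simp add: abs_mult)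
      also have "\<dots> \<le> lam ^ i / fact i * 1" using assms by (intro mult_left_mono) auto
      finally show "\<bar>lam ^ i / fact i * h i\<bar> \<le> lam ^ i / fact i" by simp
    qed
    finally show ?thesis .
  qed
  then show ?thesis using assms(1)
    by (cases "k = 0") (simp_all add: steng_def stT_def abs_mult mult_left_mono del: times_divide_eq_left times_divide_eq_right)
qed

lemma stT_Suc: "lam > 0 \<Longrightarrow> stT lam (Suc k) = (real k * stT lam k + 1) / lam"
proof (cases k)
  case 0 then show ?thesis by (simp add: stT_def)
next
  case (Suc m)
  assume l: "lam > 0"
  have fk: "fact k = real k * fact m" using Suc by simp
  have "lam * stT lam (Suc k) = fact k / lam ^ k * (\<Sum>i<Suc k. lam ^ i / fact i)"
    using l by (simp add: stT_def)
  also have "\<dots> = fact k / lam ^ k * (\<Sum>i<k. lam ^ i / fact i) + 1"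
    using l by (simp add: field_simps)
  also have "fact k / lam ^ k * (\<Sum>i<k. lam ^ i / fact i) = real k * stT lam k"
    using Suc fk by (simp add: stT_def)
  finally show ?thesis using l by (simp add: field_simps)
qed

lemma stT_low0: "lam > 0 \<Longrightarrow> (lam - real (Suc k0)) * stT lam (Suc k0) \<le> 1"
proof (induction k0)
  case 0
  then show ?case by (simp add: stT_def)
next
  case (Suc k0)
  define k where "k = Suc k0"
  note Suc = Suc[folded k_def]
  have goal: "(lam - real (Suc k)) * stT lam (Suc k) \<le> 1"
  proof (cases "real (Suc k) \<ge> lam")
    case True
    then show ?thesis using stT_nonneg[OF Suc.prems, of "Suc k"]
      by (metis diff_le_0_iff_le dual_order.trans mult_nonpos_nonneg zero_le_one)
  next
    case False
    then have lk: "lam - real k > 0" "lam - real k - 1 > 0" by auto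
    have "(lam - real k) * stT lam k \<le> 1" using Suc.IH[OF Suc.prems] by (simp add: k_def)
    then have Tk: "stT lam k \<le> 1 / (lam - real k)"
      using lk by (simp add: pos_le_divide_eq mult.commute)
    have "(lam - real (Suc k)) * stT lam (Suc k) = (lam - real k - 1) * (real k * stT lam k + 1) / lam"
      using Suc.prems by (simp add: stT_Suc)
    also have "\<dots> \<le> (lam - real k - 1) * (real k * (1 / (lam - real k)) + 1) / lam"
      using lk Suc.prems Tk by (intro divide_right_mono mult_left_mono add_right_mono) auto
    also have "\<dots> = (lam - real k - 1) / (lam - real k)"
      using lk Suc.prems by (simp add: field_simps)
    also have "\<dots> \<le> 1" using lk by simp
    finally show ?thesis .
  qed
  then show ?case by (simp add: k_def)
qed

lemma stT_low: "lam > 0 \<Longrightarrow> k \<ge> 1 \<Longrightarrow> (lam - real k) * stT lam k \<le> 1"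
  using stT_low0[of lam "k - 1"] by simp

lemma pow_fact_tail:
  assumes "lam \<ge> 0"
  shows "lam ^ (i + k) / fact (i + k) \<le> lam ^ k / fact k * (lam / (real k + 1)) ^ i"
proof (induction i)
  case 0 then show ?case by simp
next
  case (Suc i)
  have "lam ^ (Suc i + k) / fact (Suc i + k) = (lam ^ (i + k) / fact (i + k)) * (lam / (real (i + k) + 1))"
    by (simp add: field_simps)
  also have "\<dots> \<le> (lam ^ k / fact k * (lam / (real k + 1)) ^ i) * (lam / (real k + 1))"
    using Suc.IH assms by (intro mult_mono divide_left_mono) auto
  also have "\<dots> = lam ^ k / fact k * (lam / (real k + 1)) ^ Suc i" by simp
  finally show ?case .
qed

lemma steng_high:
  assumes lam: "lam > 0" and h: "\<And>i. \<bar>h i\<bar> \<le> 1"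
    and s0: "(\<lambda>i. lam ^ i / fact i * h i) sums 0" and k: "real k > lam"
  shows "(real k - lam) * \<bar>steng lam h k\<bar> \<le> 2"
proof -
  have k1: "k \<ge> 1" using k lam by (cases k) auto
  let ?c = "\<lambda>i. lam ^ i / fact i * h i"
  have tail: "(\<lambda>i. ?c (i + k)) sums (0 - (\<Sum>i<k. ?c i))" by (rule sums_split_initial_segment[OF s0])
  let ?q = "lam / (real k + 1)"
  have q: "0 \<le> ?q" "?q < 1" using lam k by auto
  have nq: "norm ?q < 1" using q lam by simp
  have gs: "(\<lambda>i. lam ^ k / fact k * ?q ^ i) sums (lam ^ k / fact k * (1 / (1 - ?q)))"
    by (rule sums_mult[OF geometric_sums[OF nq]])
  have bnd: "norm (?c (i + k)) \<le> lam ^ k / fact k * ?q ^ i" for i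
  proof -
    have "norm (?c (i + k)) = lam ^ (i + k) / fact (i + k) * \<bar>h (i + k)\<bar>"
      using lam by (simp add: abs_mult)
    also have "\<dots> \<le> lam ^ (i + k) / fact (i + k) * 1" using h lam by (intro mult_left_mono) auto
    also have "\<dots> \<le> lam ^ k / fact k * ?q ^ i" using pow_fact_tail[of lam i k] lam by simp
    finally show ?thesis .
  qed
  have N: "norm (\<Sum>i. ?c (i + k)) \<le> (\<Sum>i. lam ^ k / fact k * ?q ^ i)"
    by (rule norm_suminf_le[OF bnd]) (rule sums_summable[OF gs])
  have e1: "(\<Sum>i. ?c (i + k)) = - (\<Sum>i<k. ?c i)" using tail by (simp add: sums_iff)
  have e2: "(\<Sum>i. lam ^ k / fact k * ?q ^ i) = lam ^ k / fact k * (1 / (1 - ?q))"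
    using gs by (simp add: sums_iff)
  have e3: "1 / (1 - ?q) = (real k + 1) / (real k + 1 - lam)"
  proof -
    have h: "1 - ?q = (real k + 1 - lam) / (real k + 1)" by (simp add: diff_divide_distrib)
    have "1 / (1 - ?q) = inverse ((real k + 1 - lam) / (real k + 1))"
      by (simp only: h inverse_eq_divide)
    then show ?thesis by (simp only: inverse_divide)
  qed
  have "\<bar>\<Sum>i<k. ?c i\<bar> = norm (\<Sum>i. ?c (i + k))" unfolding e1 real_norm_def abs_minus_cancel ..
  also note N
  also have "(\<Sum>i. lam ^ k / fact k * ?q ^ i) = lam ^ k / fact k * ((real k + 1) / (real k + 1 - lam))"
    unfolding e2 e3 ..
  finally have S: "\<bar>\<Sum>i<k. ?c i\<bar> \<le> lam ^ k / fact k * ((real k + 1) / (real k + 1 - lam))" .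
  have fk: "fact k = real k * fact (k - 1)" by (rule fact_reduce) (use k1 in simp)
  have PE: "fact (k - 1) / lam ^ k * (lam ^ k / fact k) = 1 / real k"
  proof -
    have "lam ^ k \<noteq> 0" using lam by simp
    have gen: "\<And>a b c::real. b \<noteq> 0 \<Longrightarrow> a / b * (b / c) = a / c" by simp
    have "fact (k - 1) / lam ^ k * (lam ^ k / fact k) = fact (k - 1) / (fact k :: real)"
      by (rule gen) fact
    also have "\<dots> = 1 / real k" unfolding fk using k1 by simp
    finally show ?thesis .
  qed
  have "\<bar>steng lam h k\<bar> = fact (k - 1) / lam ^ k * \<bar>\<Sum>i<k. ?c i\<bar>"
    using k1 lam by (simp add: steng_def abs_mult)
  also have "\<dots> \<le> fact (k - 1) / lam ^ k * (lam ^ k / fact k * ((real k + 1) / (real k + 1 - lam)))"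
    using S lam by (intro mult_left_mono) auto
  also have "\<dots> = 1 / real k * ((real k + 1) / (real k + 1 - lam))"
    unfolding mult.assoc[symmetric, of "fact (k - 1) / lam ^ k"] PE ..
  finally have G: "\<bar>steng lam h k\<bar> \<le> 1 / real k * ((real k + 1) / (real k + 1 - lam))" .
  have "(real k - lam) * \<bar>steng lam h k\<bar> \<le> (real k - lam) * (1 / real k * ((real k + 1) / (real k + 1 - lam)))"
    using G k by (intro mult_left_mono) auto
  also have "\<dots> = ((real k - lam) / (real k + 1 - lam)) * ((real k + 1) / real k)"
    by (simp add: mult_ac)
  also have "\<dots> \<le> 1 * ((real k + 1) / real k)"
    using k k1 lam by (intro mult_right_mono) auto
  also have "\<dots> \<le> 2" using k1 by (simp add: divide_le_eq)
  finally show ?thesis .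
qed

lemma steng_diff:
  assumes lam: "lam > 0" and h: "\<And>i. \<bar>h i\<bar> \<le> 1"
    and s0: "(\<lambda>i. lam ^ i / fact i * h i) sums 0" and k: "k \<ge> 1"
  shows "\<bar>steng lam h (Suc k) - steng lam h k\<bar> \<le> 3 / lam"
proof -
  have eq: "steng lam h (Suc k) - steng lam h k = (h k + (real k - lam) * steng lam h k) / lam"
    using steng_eq[OF lam, of h k] lam by (simp add: field_simps)
  have m: "\<bar>(real k - lam) * steng lam h k\<bar> \<le> 2"
  proof (cases "real k > lam")
    case True
    then show ?thesis using steng_high[OF lam h s0 True] by (simp add: abs_mult)
  next
    case False
    have "\<bar>(real k - lam) * steng lam h k\<bar> = (lam - real k) * \<bar>steng lam h k\<bar>"
      using False by (simp add: abs_mult)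
    also have "\<dots> \<le> (lam - real k) * stT lam k"
      using False steng_le_T[OF lam h] by (intro mult_left_mono) auto
    also have "\<dots> \<le> 1" by (rule stT_low[OF lam k])
    finally show ?thesis by simp
  qed
  have "\<bar>h k + (real k - lam) * steng lam h k\<bar> \<le> 3"
    using h[of k] m by linarith
  then show ?thesis using lam by (simp add: eq abs_divide divide_right_mono)
qed

lemma steng_lip:
  assumes lam: "lam > 0" and h: "\<And>i. \<bar>h i\<bar> \<le> 1"
    and s0: "(\<lambda>i. lam ^ i / fact i * h i) sums 0" and a: "a \<ge> 1" and b: "b \<ge> 1"
  shows "\<bar>steng lam h a - steng lam h b\<bar> \<le> 3 / lam * \<bar>real a - real b\<bar>"
proof -
  have mono: "\<bar>steng lam h (a + d) - steng lam h a\<bar> \<le> 3 / lam * real d" if "a \<ge> 1" for a d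
  proof (induction d)
    case 0 then show ?case by simp
  next
    case (Suc d)
    have "\<bar>steng lam h (Suc (a + d)) - steng lam h (a + d)\<bar> \<le> 3 / lam"
      by (rule steng_diff[OF lam h s0]) (use that in simp)
    moreover have "3 / lam * real (Suc d) = 3 / lam + 3 / lam * real d" by (simp add: distrib_left)
    ultimately show ?case using Suc.IH by simp
  qed
  show ?thesis
  proof (cases "a \<le> b")
    case True
    then obtain d where "b = a + d" using le_Suc_ex by blast
    then show ?thesis using mono[OF a, of d] by (simp add: abs_minus_commute)
  next
    case False
    then obtain d where "a = b + d" using le_Suc_ex[of b a] by auto
    then show ?thesis using mono[OF b, of d] by simp
  qed
qed


definition opp :: "nat \<Rightarrow> nat \<Rightarrow> nat \<Rightarrow> bool" where
  "opp l j k \<longleftrightarrow> (j < l \<and> l < k) \<or> (k < l \<and> l < j)"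

context
  fixes n l :: nat
  assumes l: "l \<in> {1..n}"
begin

abbreviation "PS \<equiv> permutations_of_set {1..n}"
definition Ind :: "nat list \<Rightarrow> nat \<Rightarrow> real" where
  "Ind xs k = (if anc xs l k then 1 else 0)"
definition pj :: "nat \<Rightarrow> real" where
  "pj k = 1 / real (card (iv l k))"

lemma Ind_01: "Ind xs k \<ge> 0" "Ind xs k \<le> 1" by (auto simp: Ind_def)

lemma card_PS: "card PS > 0" by simp

lemma coup:
  assumes j: "j \<in> {1..n}" "j \<noteq> l"
  shows "(\<Sum>xs\<in>PS. f (psi (iv l j) j xs)) = real (card (iv l j)) * (\<Sum>xs\<in>PS. Ind xs j * f xs)"
proof -
  have "(\<Sum>xs\<in>PS. f (psi (iv l j) j xs)) =
      real (card (iv l j)) * (\<Sum>ys\<in>{ys \<in> PS. find (\<lambda>y. y \<in> iv l j) ys = Some j}. f ys)"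
    by (rule coupling_sum[OF _ iv_sub[OF l j(1)] iv_mem(1)]) simp
  also have "(\<Sum>ys\<in>{ys \<in> PS. find (\<lambda>y. y \<in> iv l j) ys = Some j}. f ys) =
      (\<Sum>ys\<in>PS. if find (\<lambda>y. y \<in> iv l j) ys = Some j then f ys else 0)"
    by (rule sum.inter_filter) simp
  also have "\<dots> = (\<Sum>xs\<in>PS. Ind xs j * f xs)"
    by (intro sum.cong refl) (simp add: Ind_def anc_def j(2))
  finally show ?thesis .
qed

lemma card_iv_pos: "card (iv l j) > 0"
  by (simp add: card_iv)

lemma sum_Ind:
  assumes j: "j \<in> {1..n}" "j \<noteq> l"
  shows "(\<Sum>xs\<in>PS. Ind xs j) = card PS * pj j"
proof -
  have "real (card PS) = (\<Sum>xs\<in>PS. (\<lambda>_. 1) (psi (iv l j) j xs))" by simp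
  also have "\<dots> = real (card (iv l j)) * (\<Sum>xs\<in>PS. Ind xs j)" using coup[OF j, of "\<lambda>_. 1"] by simp
  finally show ?thesis using card_iv_pos[of j] by (simp add: pj_def field_simps)
qed

lemma sum_Ind_same:
  assumes j: "j \<in> {1..n}" "j \<noteq> l" and k: "k \<in> {1..n}" "k \<noteq> l" "k \<noteq> j" "k < l \<longleftrightarrow> j < l"
  shows "(\<Sum>xs\<in>PS. Ind xs j * Ind xs k) = card PS * pj j * pj k"
proof -
  have "(\<Sum>xs\<in>PS. Ind (psi (iv l j) j xs) k) = (\<Sum>xs\<in>PS. Ind xs k)"
    by (intro sum.cong refl) (simp add: Ind_def psi_anc_same[OF l j(1) j(2) _ k(3,4)])
  also have "\<dots> = card PS * pj k" by (rule sum_Ind[OF k(1,2)])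
  finally have eq: "real (card (iv l j)) * (\<Sum>xs\<in>PS. Ind xs j * Ind xs k) = card PS * pj k"
    using coup[OF j, of "\<lambda>xs. Ind xs k"] by simp
  have "(\<Sum>xs\<in>PS. Ind xs j * Ind xs k) = (real (card (iv l j)) * (\<Sum>xs\<in>PS. Ind xs j * Ind xs k)) / real (card (iv l j))"
    using card_iv_pos[of j] by simp
  also have "\<dots> = card PS * pj k / real (card (iv l j))" unfolding eq ..
  also have "\<dots> = card PS * pj j * pj k" by (simp add: pj_def)
  finally show ?thesis .
qed

lemma sum_first:
  assumes M: "M \<subseteq> {1..n}" "j \<in> M"
  shows "(\<Sum>xs\<in>PS. if find (\<lambda>y. y \<in> M) xs = Some j then 1 else 0) = card PS / real (card M)"
proof -
  have fin: "finite M" using M finite_subset by blast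
  have pos: "card M > 0" using M fin by (auto simp: card_gt_0_iff)
  have "real (card PS) = (\<Sum>xs\<in>PS. (\<lambda>_. 1::real) (psi M j xs))" by simp
  also have "\<dots> = real (card M) * (\<Sum>ys\<in>{ys \<in> PS. find (\<lambda>y. y \<in> M) ys = Some j}. 1)"
    by (rule coupling_sum[OF _ M]) simp
  also have "(\<Sum>ys\<in>{ys \<in> PS. find (\<lambda>y. y \<in> M) ys = Some j}. 1::real) =
      (\<Sum>xs\<in>PS. if find (\<lambda>y. y \<in> M) xs = Some j then 1 else 0)"
    by (rule sum.inter_filter) simp
  finally show ?thesis using pos by (simp add: field_simps)
qed


lemma sum_Ind_opp:
  assumes j: "j \<in> {1..n}" "j \<noteq> l" and k: "k \<in> {1..n}" "k \<noteq> l" and o: "opp l j k"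
  shows "(\<Sum>xs\<in>PS. Ind xs j * Ind xs k) \<le> card PS * ((pj j + pj k) / real (card (iv j k)))"
proof -
  let ?M = "iv j k"
  have Msub: "?M \<subseteq> {1..n}" using j k by (auto simp: iv_def)
  have Mun: "?M = iv l j \<union> iv l k" using o by (auto simp: iv_def opp_def)
  let ?F = "\<lambda>a xs. if find (\<lambda>y. y \<in> ?M) xs = Some a then 1 else (0::real)"
  have pw: "Ind xs j * Ind xs k \<le> ?F j xs * Ind xs k + ?F k xs * Ind xs j" if xs: "xs \<in> PS" for xs
  proof (cases "anc xs l j \<and> anc xs l k")
    case True
    have "?M \<subseteq> set xs" using xs Msub by (auto simp: permutations_of_set_def)
    then obtain m where m: "find (\<lambda>y. y \<in> ?M) xs = Some m"
      using iv_mem(2)[of j k] by (cases "find (\<lambda>y. y \<in> ?M) xs") (auto simp: find_None_iff)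
    then have mM: "m \<in> ?M" using find_Some_in by fastforce
    have "m = j \<or> m = k"
    proof (cases "m \<in> iv l j")
      case True
      have "find (\<lambda>y. y \<in> iv l j) xs = Some m"
        by (rule find_sub[OF m]) (use Mun True in auto)
      then show ?thesis using \<open>anc xs l j \<and> anc xs l k\<close> by (simp add: anc_def)
    next
      case False
      then have "m \<in> iv l k" using Mun mM by auto
      have "find (\<lambda>y. y \<in> iv l k) xs = Some m"
        by (rule find_sub[OF m]) (use Mun \<open>m \<in> iv l k\<close> in auto)
      then show ?thesis using \<open>anc xs l j \<and> anc xs l k\<close> by (simp add: anc_def)
    qed
    then show ?thesis using m True j k by (auto simp: Ind_def)
  next
    case False
    then show ?thesis by (auto simp: Ind_def)
  qed
  have part: "(\<Sum>xs\<in>PS. ?F a xs * Ind xs b) = card PS / real (card ?M) * pj b"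
    if b: "b \<in> {1..n}" "b \<noteq> l" and a: "a \<in> ?M" "a \<notin> iv l b" and bM: "iv l b \<subseteq> ?M" for a b
  proof -
    have inv: "?F a (psi (iv l b) b xs) = ?F a xs" if xs: "xs \<in> PS" for xs
    proof -
      note pf = psi_facts[OF l b(1) b(2) xs]
      have "find (\<lambda>y. y \<in> ?M) xs = Some a \<longleftrightarrow> find (\<lambda>y. y \<in> ?M) (psi (iv l b) b xs) = Some a"
        by (rule find_far[OF pf(1)[symmetric] pf(2)[symmetric] pf(3)[symmetric]]) (use bM a in auto)
      then show ?thesis by simp
    qed
    have "(\<Sum>xs\<in>PS. ?F a (psi (iv l b) b xs)) = real (card (iv l b)) * (\<Sum>xs\<in>PS. Ind xs b * ?F a xs)"
      by (rule coup[OF b])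
    moreover have "(\<Sum>xs\<in>PS. ?F a (psi (iv l b) b xs)) = card PS / real (card ?M)"
      using sum_first[OF Msub a(1)] inv by (simp cong: sum.cong)
    ultimately have eq: "real (card (iv l b)) * (\<Sum>xs\<in>PS. ?F a xs * Ind xs b) = card PS / real (card ?M)"
      by (simp add: mult.commute)
    have "(\<Sum>xs\<in>PS. ?F a xs * Ind xs b) = (real (card (iv l b)) * (\<Sum>xs\<in>PS. ?F a xs * Ind xs b)) / real (card (iv l b))"
      using card_iv_pos[of b] by simp
    also have "\<dots> = card PS / real (card ?M) / real (card (iv l b))" unfolding eq ..
    finally show ?thesis by (simp add: pj_def)
  qed
  have "(\<Sum>xs\<in>PS. Ind xs j * Ind xs k) \<le> (\<Sum>xs\<in>PS. ?F j xs * Ind xs k + ?F k xs * Ind xs j)"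
    by (rule sum_mono) (rule pw)
  also have "\<dots> = (\<Sum>xs\<in>PS. ?F j xs * Ind xs k) + (\<Sum>xs\<in>PS. ?F k xs * Ind xs j)"
    by (rule sum.distrib)
  also have "(\<Sum>xs\<in>PS. ?F j xs * Ind xs k) = card PS / real (card ?M) * pj k"
    by (rule part[OF k]) (use o iv_mem Mun in \<open>auto simp: iv_def opp_def\<close>)
  also have "(\<Sum>xs\<in>PS. ?F k xs * Ind xs j) = card PS / real (card ?M) * pj j"
    by (rule part[OF j]) (use o iv_mem Mun in \<open>auto simp: iv_def opp_def\<close>)
  also have "card PS / real (card ?M) * pj k + card PS / real (card ?M) * pj j =
      card PS * ((pj j + pj k) / real (card (iv j k)))"
    by (simp add: add_divide_distrib distrib_left)
  finally show ?thesis .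
qed


definition Wn :: "nat list \<Rightarrow> nat" where
  "Wn xs = card {j \<in> {1..n}. anc xs l j}"

abbreviation "JS \<equiv> {1..n} - {l}"

lemma pj_nonneg: "pj j \<ge> 0" by (simp add: pj_def)

lemma Wn_sum: "real (Wn xs) = (\<Sum>j\<in>JS. Ind xs j)"
proof -
  have "{j \<in> {1..n}. anc xs l j} = {j \<in> JS. anc xs l j}" by (auto simp: anc_def)
  then have "real (Wn xs) = (\<Sum>j\<in>{j \<in> JS. anc xs l j}. 1)" by (simp add: Wn_def)
  also have "\<dots> = (\<Sum>j\<in>JS. if anc xs l j then 1 else 0)" by (rule sum.inter_filter) simp
  also have "\<dots> = (\<Sum>j\<in>JS. Ind xs j)" by (simp add: Ind_def)
  finally show ?thesis .
qed

lemma lam_eq: "(\<Sum>xs\<in>PS. real (Wn xs)) = card PS * (\<Sum>j\<in>JS. pj j)"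
proof -
  have "(\<Sum>xs\<in>PS. real (Wn xs)) = (\<Sum>xs\<in>PS. \<Sum>j\<in>JS. Ind xs j)" by (simp add: Wn_sum)
  also have "\<dots> = (\<Sum>j\<in>JS. \<Sum>xs\<in>PS. Ind xs j)" by (rule sum.swap)
  also have "\<dots> = (\<Sum>j\<in>JS. card PS * pj j)" by (intro sum.cong refl sum_Ind) auto
  finally show ?thesis by (simp add: sum_distrib_left)
qed

lemma coup_inv:
  assumes j: "j \<in> {1..n}" "j \<noteq> l"
  shows "(\<Sum>xs\<in>PS. Ind xs j * f xs) = pj j * (\<Sum>xs\<in>PS. f (psi (iv l j) j xs))"
  using coup[OF j, of f] card_iv_pos[of j] by (simp add: pj_def)

lemma Wn_psi:
  assumes j: "j \<in> {1..n}" "j \<noteq> l" and xs: "xs \<in> PS"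
  shows "real (Wn (psi (iv l j) j xs)) \<ge> 1"
    "\<bar>real (Suc (Wn xs)) - real (Wn (psi (iv l j) j xs))\<bar> \<le>
       Ind xs j + (\<Sum>k\<in>JS - {j}. Ind (psi (iv l j) j xs) k - Ind xs k)"
proof -
  let ?y = "psi (iv l j) j xs"
  have jJ: "j \<in> JS" using j by simp
  have a1: "Ind ?y j = 1" using psi_anc_self[OF l j(1) j(2) xs] by (simp add: Ind_def)
  have W1: "real (Wn ?y) = 1 + (\<Sum>k\<in>JS - {j}. Ind ?y k)"
    unfolding Wn_sum by (subst sum.remove[OF _ jJ]) (simp_all add: a1)
  have W0: "real (Wn xs) = Ind xs j + (\<Sum>k\<in>JS - {j}. Ind xs k)"
    unfolding Wn_sum by (subst sum.remove[OF _ jJ]) simp_all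
  have mono: "Ind ?y k - Ind xs k \<ge> 0" if "k \<in> JS - {j}" for k
    using psi_anc_mono[OF l j(1) j(2) xs, of k] that by (auto simp: Ind_def)
  let ?D = "(\<Sum>k\<in>JS - {j}. Ind ?y k - Ind xs k)"
  have D0: "?D \<ge> 0" by (rule sum_nonneg) (use mono in auto)
  have "(\<Sum>k\<in>JS - {j}. Ind ?y k) \<ge> 0" by (rule sum_nonneg) (simp add: Ind_def)
  then show "real (Wn ?y) \<ge> 1" using W1 by simp
  have "real (Suc (Wn xs)) - real (Wn ?y) = Ind xs j - ?D"
    using W0 W1 by (simp add: sum_subtractf)
  then show "\<bar>real (Suc (Wn xs)) - real (Wn ?y)\<bar> \<le> Ind xs j + ?D"
    using D0 Ind_01[of xs j] by simp
qed

definition Bd :: real where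
  "Bd = (\<Sum>j\<in>JS. pj j ^ 2) +
        (\<Sum>j\<in>JS. \<Sum>k\<in>{k \<in> JS. opp l j k}. (pj j + pj k) / real (card (iv j k)) - pj j * pj k)"

lemma per_j:
  assumes j: "j \<in> JS"
  shows "pj j * (\<Sum>xs\<in>PS. Ind xs j + (\<Sum>k\<in>JS - {j}. Ind (psi (iv l j) j xs) k - Ind xs k)) \<le>
    card PS * (pj j ^ 2 + (\<Sum>k\<in>{k \<in> JS. opp l j k}. (pj j + pj k) / real (card (iv j k)) - pj j * pj k))"
proof -
  have j': "j \<in> {1..n}" "j \<noteq> l" using j by auto
  let ?y = "\<lambda>xs. psi (iv l j) j xs"
  have trm: "pj j * (\<Sum>xs\<in>PS. Ind (?y xs) k - Ind xs k) \<le>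
      (if opp l j k then card PS * ((pj j + pj k) / real (card (iv j k)) - pj j * pj k) else 0)"
    if k: "k \<in> JS - {j}" for k
  proof -
    have k': "k \<in> {1..n}" "k \<noteq> l" "k \<noteq> j" using k by auto
    have "pj j * (\<Sum>xs\<in>PS. Ind (?y xs) k - Ind xs k) = pj j * (\<Sum>xs\<in>PS. Ind (?y xs) k) - pj j * (\<Sum>xs\<in>PS. Ind xs k)"
      by (simp add: sum_subtractf right_diff_distrib)
    also have "pj j * (\<Sum>xs\<in>PS. Ind (?y xs) k) = (\<Sum>xs\<in>PS. Ind xs j * Ind xs k)"
      by (rule coup_inv[OF j', symmetric])
    also have "pj j * (\<Sum>xs\<in>PS. Ind xs k) = card PS * pj j * pj k"
      using sum_Ind[OF k'(1,2)] by simp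
    finally have eq: "pj j * (\<Sum>xs\<in>PS. Ind (?y xs) k - Ind xs k) = (\<Sum>xs\<in>PS. Ind xs j * Ind xs k) - card PS * pj j * pj k" .
    show ?thesis
    proof (cases "opp l j k")
      case True
      then show ?thesis using eq sum_Ind_opp[OF j' k'(1,2) True] by (simp add: right_diff_distrib)
    next
      case False
      then have "k < l \<longleftrightarrow> j < l" using k' j' by (auto simp: opp_def)
      have same: "(\<Sum>xs\<in>PS. Ind xs j * Ind xs k) = card PS * pj j * pj k"
        by (rule sum_Ind_same[OF j' k'(1,2,3)]) fact
      from eq same have z: "pj j * (\<Sum>xs\<in>PS. Ind (?y xs) k - Ind xs k) = 0" by linarith
      show ?thesis unfolding z using False by simp
    qed
  qed
  have e1: "(\<Sum>xs\<in>PS. Ind xs j + (\<Sum>k\<in>JS - {j}. Ind (?y xs) k - Ind xs k)) =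
      (\<Sum>xs\<in>PS. Ind xs j) + (\<Sum>xs\<in>PS. \<Sum>k\<in>JS - {j}. Ind (?y xs) k - Ind xs k)"
    by (rule sum.distrib)
  have e2: "(\<Sum>xs\<in>PS. \<Sum>k\<in>JS - {j}. Ind (?y xs) k - Ind xs k) = (\<Sum>k\<in>JS - {j}. \<Sum>xs\<in>PS. Ind (?y xs) k - Ind xs k)"
    by (rule sum.swap)
  have e3: "pj j * (\<Sum>k\<in>JS - {j}. \<Sum>xs\<in>PS. Ind (?y xs) k - Ind xs k) = (\<Sum>k\<in>JS - {j}. pj j * (\<Sum>xs\<in>PS. Ind (?y xs) k - Ind xs k))"
    by (rule sum_distrib_left)
  have f1: "pj j * (\<Sum>xs\<in>PS. Ind xs j) = card PS * pj j ^ 2"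
    using sum_Ind[OF j'] by (simp add: power2_eq_square)
  have "(\<Sum>k\<in>JS - {j}. pj j * (\<Sum>xs\<in>PS. Ind (?y xs) k - Ind xs k)) \<le>
      (\<Sum>k\<in>JS - {j}. if opp l j k then card PS * ((pj j + pj k) / real (card (iv j k)) - pj j * pj k) else 0)"
    by (rule sum_mono) (rule trm)
  also have "\<dots> = (\<Sum>k\<in>{k \<in> JS - {j}. opp l j k}. card PS * ((pj j + pj k) / real (card (iv j k)) - pj j * pj k))"
    by (rule sum.inter_filter[symmetric]) simp
  also have "\<dots> = (\<Sum>k\<in>{k \<in> JS. opp l j k}. card PS * ((pj j + pj k) / real (card (iv j k)) - pj j * pj k))"
    by (rule sum.cong) (auto simp: opp_def)
  also have "\<dots> = card PS * (\<Sum>k\<in>{k \<in> JS. opp l j k}. (pj j + pj k) / real (card (iv j k)) - pj j * pj k)"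
    by (rule sum_distrib_left[symmetric])
  finally have f2: "(\<Sum>k\<in>JS - {j}. pj j * (\<Sum>xs\<in>PS. Ind (?y xs) k - Ind xs k)) \<le>
      card PS * (\<Sum>k\<in>{k \<in> JS. opp l j k}. (pj j + pj k) / real (card (iv j k)) - pj j * pj k)" .
  have "pj j * (\<Sum>xs\<in>PS. Ind xs j + (\<Sum>k\<in>JS - {j}. Ind (?y xs) k - Ind xs k)) =
      pj j * (\<Sum>xs\<in>PS. Ind xs j) + (\<Sum>k\<in>JS - {j}. pj j * (\<Sum>xs\<in>PS. Ind (?y xs) k - Ind xs k))"
    unfolding e1 e2 e3[symmetric] by (rule distrib_left)
  then show ?thesis using f1 f2 by (simp only: distrib_left)
qed

lemma stein_main:
  fixes h :: "nat \<Rightarrow> real"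
  assumes lam: "(\<Sum>j\<in>JS. pj j) > 0" and h: "\<And>i. \<bar>h i\<bar> \<le> 1"
    and s0: "(\<lambda>i. (\<Sum>j\<in>JS. pj j) ^ i / fact i * h i) sums 0"
  shows "(\<Sum>xs\<in>PS. h (Wn xs)) \<le> 3 / (\<Sum>j\<in>JS. pj j) * card PS * Bd"
proof -
  define lm where "lm = (\<Sum>j\<in>JS. pj j)"
  have lm: "lm > 0" using lam by (simp add: lm_def)
  have s0': "(\<lambda>i. lm ^ i / fact i * h i) sums 0" using s0 by (simp add: lm_def)
  define g where "g = steng lm h"
  let ?y = "\<lambda>j xs. psi (iv l j) j xs"
  have A: "(\<Sum>xs\<in>PS. h (Wn xs)) = (\<Sum>xs\<in>PS. lm * g (Suc (Wn xs))) - (\<Sum>xs\<in>PS. real (Wn xs) * g (Wn xs))"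
  proof -
    have "h (Wn xs) = lm * g (Suc (Wn xs)) - real (Wn xs) * g (Wn xs)" for xs
      unfolding g_def using steng_eq[OF lm, of h "Wn xs"] by simp
    then show ?thesis by (simp add: sum_subtractf)
  qed
  have B: "(\<Sum>xs\<in>PS. real (Wn xs) * g (Wn xs)) = (\<Sum>j\<in>JS. pj j * (\<Sum>xs\<in>PS. g (Wn (?y j xs))))"
  proof -
    have "(\<Sum>xs\<in>PS. real (Wn xs) * g (Wn xs)) = (\<Sum>xs\<in>PS. \<Sum>j\<in>JS. Ind xs j * g (Wn xs))"
      by (simp add: Wn_sum sum_distrib_right)
    also have "\<dots> = (\<Sum>j\<in>JS. \<Sum>xs\<in>PS. Ind xs j * g (Wn xs))" by (rule sum.swap)
    also have "\<dots> = (\<Sum>j\<in>JS. pj j * (\<Sum>xs\<in>PS. g (Wn (?y j xs))))"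
      by (intro sum.cong refl coup_inv) auto
    finally show ?thesis .
  qed
  have C: "(\<Sum>xs\<in>PS. lm * g (Suc (Wn xs))) = (\<Sum>j\<in>JS. pj j * (\<Sum>xs\<in>PS. g (Suc (Wn xs))))"
  proof -
    have "(\<Sum>xs\<in>PS. lm * g (Suc (Wn xs))) = (\<Sum>xs\<in>PS. \<Sum>j\<in>JS. pj j * g (Suc (Wn xs)))"
      by (simp add: lm_def sum_distrib_right)
    also have "\<dots> = (\<Sum>j\<in>JS. \<Sum>xs\<in>PS. pj j * g (Suc (Wn xs)))" by (rule sum.swap)
    also have "\<dots> = (\<Sum>j\<in>JS. pj j * (\<Sum>xs\<in>PS. g (Suc (Wn xs))))" by (simp add: sum_distrib_left)
    finally show ?thesis .
  qed
  have "(\<Sum>xs\<in>PS. h (Wn xs)) = (\<Sum>j\<in>JS. pj j * (\<Sum>xs\<in>PS. g (Suc (Wn xs)) - g (Wn (?y j xs))))"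
    unfolding A B C by (simp add: sum_subtractf right_diff_distrib)
  also have "\<dots> \<le> (\<Sum>j\<in>JS. pj j * (\<Sum>xs\<in>PS. 3 / lm *
        (Ind xs j + (\<Sum>k\<in>JS - {j}. Ind (?y j xs) k - Ind xs k))))"
  proof (rule sum_mono, rule mult_left_mono[OF _ pj_nonneg], rule sum_mono)
    fix j xs assume j: "j \<in> JS" and xs: "xs \<in> PS"
    have j': "j \<in> {1..n}" "j \<noteq> l" using j by auto
    note W = Wn_psi[OF j' xs]
    have "g (Suc (Wn xs)) - g (Wn (?y j xs)) \<le> \<bar>g (Suc (Wn xs)) - g (Wn (?y j xs))\<bar>" by simp
    also have "\<dots> \<le> 3 / lm * \<bar>real (Suc (Wn xs)) - real (Wn (?y j xs))\<bar>"
      unfolding g_def by (rule steng_lip[OF lm h s0']) (use W(1) in auto)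
    also have "\<dots> \<le> 3 / lm * (Ind xs j + (\<Sum>k\<in>JS - {j}. Ind (?y j xs) k - Ind xs k))"
      using W(2) lm by (intro mult_left_mono) auto
    finally show "g (Suc (Wn xs)) - g (Wn (?y j xs)) \<le> 3 / lm * (Ind xs j + (\<Sum>k\<in>JS - {j}. Ind (?y j xs) k - Ind xs k))" .
  qed
  also have "\<dots> = 3 / lm * (\<Sum>j\<in>JS. pj j * (\<Sum>xs\<in>PS. Ind xs j + (\<Sum>k\<in>JS - {j}. Ind (?y j xs) k - Ind xs k)))"
    by (simp add: sum_distrib_left mult_ac)
  also have "\<dots> \<le> 3 / lm * (\<Sum>j\<in>JS. card PS * (pj j ^ 2 + (\<Sum>k\<in>{k \<in> JS. opp l j k}. (pj j + pj k) / real (card (iv j k)) - pj j * pj k)))"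
    using lm by (intro mult_left_mono sum_mono per_j) auto
  also have "\<dots> = 3 / lm * card PS * Bd"
    by (simp add: Bd_def sum_distrib_left sum.distrib distrib_left mult.assoc)
  finally show ?thesis by (simp add: lm_def)
qed

end


lemma sq_sum_aux: "(\<Sum>a=1..N. 1 / (real a + 1)^2) \<le> 1 - 1 / (real N + 1)"
proof (induction N)
  case 0 then show ?case by simp
next
  case (Suc N)
  have "(\<Sum>a=1..Suc N. 1 / (real a + 1)^2) = (\<Sum>a=1..N. 1 / (real a + 1)^2) + 1 / (real N + 2)^2"
    by (simp add: add.commute)
  also have "\<dots> \<le> 1 - 1 / (real N + 1) + 1 / (real N + 2)^2" using Suc.IH by simp
  also have "\<dots> \<le> 1 - 1 / (real (Suc N) + 1)"
  proof -
    have "1 / (real N + 2)^2 \<le> 1 / ((real N + 1) * (real N + 2))"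
      by (intro divide_left_mono) (auto simp: power2_eq_square intro!: mult_right_mono)
    also have "\<dots> = 1 / (real N + 1) - 1 / (real N + 2)" by (simp add: field_simps)
    finally show ?thesis by (simp add: add.commute)
  qed
  finally show ?case .
qed

lemma sq_sum: "(\<Sum>a=1..N. 1 / (real a + 1)^2) \<le> 1"
  using sq_sum_aux[of N] by (smt (verit) divide_nonneg_nonneg of_nat_0_le_iff)

lemma g1:
  fixes x y r :: real
  assumes "x > 0" "y > 0" "r > 0" "y - x = r"
  shows "1 / (x * y) = (1 / x - 1 / y) / r"
proof -
  have "1 / x - 1 / y = (y - x) / (x * y)" using assms by (simp add: field_simps)
  then show ?thesis using assms by simp
qed

lemma g2:
  fixes c y :: real
  assumes "y > 0"
  shows "(c + 1 / y) / y = c / y + 1 / y^2"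
  using assms by (simp add: field_simps power2_eq_square)

lemma g3:
  fixes x y :: real
  assumes "x > 0" "y > 0" "y - x = 1"
  shows "1 / (x * y^2) = 1 / x - 1 / y - 1 / y^2"
proof -
  have "1 / x - 1 / y - 1 / y^2 = (y * y - x * y - x) / (x * y^2)"
    using assms(1,2) by (simp add: field_simps power2_eq_square)
  also have "y * y - x * y - x = y * (y - x) - x" by (simp add: algebra_simps)
  also have "\<dots> = 1" using assms by simp
  finally show ?thesis by (rule sym)
qed

definition Hp :: "nat \<Rightarrow> real" where
  "Hp a = (\<Sum>i=1..a. 1 / (real i + 1))"

lemma Hp_nonneg: "Hp a \<ge> 0" by (simp add: Hp_def sum_nonneg)

lemma Hp_Suc: "Hp (Suc a) = Hp a + 1 / (real a + 2)"
  by (simp add: Hp_def add.commute)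

lemma sum_shift1: "(\<Sum>i=1..a. f (Suc i)) = (\<Sum>i=1..a. f i) - f 1 + (f (Suc a) :: real)"
proof (induction a)
  case 0 then show ?case by simp
next
  case (Suc a)
  then show ?case by simp
qed

lemma inner_eq:
  assumes a: "a \<ge> 1"
  shows "(\<Sum>b=1..N. 1 / ((real b + 1) * (real a + real b + 1))) =
         (Hp a - (\<Sum>i=1..a. 1 / (real N + 1 + real i))) / real a"
proof (induction N)
  case 0
  then show ?case by (simp add: Hp_def add.commute)
next
  case (Suc N)
  let ?T = "\<lambda>N. (\<Sum>i=1..a. 1 / (real N + 1 + real i))"
  have sh: "?T (Suc N) = ?T N - 1 / (real N + 2) + 1 / (real N + real a + 2)"
    using sum_shift1[of "\<lambda>i. 1 / (real N + 1 + real i)" a] by (simp add: add_ac)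
  have "(\<Sum>b=1..Suc N. 1 / ((real b + 1) * (real a + real b + 1))) =
        (\<Sum>b=1..N. 1 / ((real b + 1) * (real a + real b + 1))) + 1 / ((real N + 2) * (real a + real N + 2))"
    by (simp add: add_ac)
  also have "\<dots> = (Hp a - ?T N) / real a + 1 / ((real N + 2) * (real a + real N + 2))"
    using Suc.IH by simp
  also have "1 / ((real N + 2) * (real a + real N + 2)) = (1 / (real N + 2) - 1 / (real N + real a + 2)) / real a"
  proof -
    show ?thesis using g1[of "real N + 2" "real a + real N + 2" "real a"] a by (simp add: add_ac)
  qed
  also have "(Hp a - ?T N) / real a + (1 / (real N + 2) - 1 / (real N + real a + 2)) / real a =
      (Hp a - ?T (Suc N)) / real a"
    unfolding sh by (simp add: diff_divide_distrib add_divide_distrib)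
  finally show ?case .
qed

lemma inner_le:
  assumes a: "a \<ge> 1"
  shows "(\<Sum>b=1..N. 1 / ((real b + 1) * (real a + real b + 1))) \<le> Hp a / real a"
proof -
  have "(\<Sum>i=1..a. 1 / (real N + 1 + real i)) \<ge> 0" by (rule sum_nonneg) simp
  then show ?thesis unfolding inner_eq[OF a] using a by (intro divide_right_mono) auto
qed

lemma F_eq: "(\<Sum>a=1..N. Hp a / (real a * (real a + 1))) = 1 - (1 + Hp N) / (real N + 1)"
proof (induction N)
  case 0 then show ?case by (simp add: Hp_def)
next
  case (Suc N)
  have "(\<Sum>a=1..Suc N. Hp a / (real a * (real a + 1))) =
      (\<Sum>a=1..N. Hp a / (real a * (real a + 1))) + Hp (Suc N) / ((real N + 1) * (real N + 2))"
    by (simp add: add_ac)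
  also have "\<dots> = 1 - (1 + Hp N) / (real N + 1) + (Hp N + 1 / (real N + 2)) / ((real N + 1) * (real N + 2))"
    using Suc.IH by (simp add: Hp_Suc)
  also have "\<dots> = 1 - (1 + Hp (Suc N)) / (real (Suc N) + 1)"
  proof -
    have p: "real N + 1 > 0" "real N + 2 > 0" by auto
    have "(Hp N + 1 / (real N + 2)) / ((real N + 1) * (real N + 2)) =
        Hp N / ((real N + 1) * (real N + 2)) + 1 / ((real N + 1) * (real N + 2)^2)"
    proof -
      have gen: "\<And>h x y::real. x > 0 \<Longrightarrow> y > 0 \<Longrightarrow> (h + 1 / y) / (x * y) = h / (x * y) + 1 / (x * y^2)"
        by (simp add: field_simps power2_eq_square)
      show ?thesis by (rule gen) (use p in auto)
    qed
    moreover have "(1 + Hp (Suc N)) / (real (Suc N) + 1) = (1 + Hp N) / (real N + 2) + 1 / (real N + 2)^2"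
    proof -
      have "(1 + Hp (Suc N)) / (real (Suc N) + 1) = ((1 + Hp N) + 1 / (real N + 2)) / (real N + 2)"
        by (simp add: Hp_Suc add_ac)
      also have "\<dots> = (1 + Hp N) / (real N + 2) + 1 / (real N + 2)^2" by (rule g2) (use p in auto)
      finally show ?thesis .
    qed
    moreover have "Hp N / ((real N + 1) * (real N + 2)) = Hp N / (real N + 1) - Hp N / (real N + 2)"
      using p by (simp add: field_simps)
    moreover have "1 / ((real N + 1) * (real N + 2)^2) = 1 / (real N + 1) - 1 / (real N + 2) - 1 / (real N + 2)^2"
      by (rule g3) (use p in auto)
    moreover have "(1 + Hp N) / (real N + 1) = 1 / (real N + 1) + Hp N / (real N + 1)"
      by (simp add: add_divide_distrib)
    moreover have "(1 + Hp N) / (real N + 2) = 1 / (real N + 2) + Hp N / (real N + 2)"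
      by (simp add: add_divide_distrib)
    ultimately show ?thesis by linarith
  qed
  finally show ?case .
qed

lemma S_le: "(\<Sum>a=1..N. \<Sum>b=1..N. 1 / ((real a + 1) * (real b + 1) * (real a + real b + 1))) \<le> 1"
proof -
  have "(\<Sum>a=1..N. \<Sum>b=1..N. 1 / ((real a + 1) * (real b + 1) * (real a + real b + 1))) =
      (\<Sum>a=1..N. 1 / (real a + 1) * (\<Sum>b=1..N. 1 / ((real b + 1) * (real a + real b + 1))))"
    by (simp add: sum_distrib_left mult.assoc)
  also have "\<dots> \<le> (\<Sum>a=1..N. 1 / (real a + 1) * (Hp a / real a))"
    by (intro sum_mono mult_left_mono inner_le) auto
  also have "\<dots> = (\<Sum>a=1..N. Hp a / (real a * (real a + 1)))"
    by (intro sum.cong refl) (simp add: field_simps)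
  also have "\<dots> \<le> 1" unfolding F_eq using Hp_nonneg[of N] by simp
  finally show ?thesis .
qed


lemma Hp_harm: "Hp a = harm (Suc a) - 1"
proof (induction a)
  case 0 then show ?case by (simp add: Hp_def harm_def)
next
  case (Suc a)
  have "harm (Suc (Suc a)) = harm (Suc a) + 1 / (real a + 2)"
    by (simp add: harm_Suc[of "Suc a"] inverse_eq_divide add_ac)
  then show ?case unfolding Hp_Suc Suc.IH by simp
qed

context
  fixes n l :: nat
  assumes l: "l \<in> {1..n}"
begin

lemma JS_split: "{1..n} - {l} = {1..l-1} \<union> {l+1..n}" using l by auto

lemma sum_JS:
  fixes f :: "nat \<Rightarrow> real"
  shows "(\<Sum>j\<in>{1..n} - {l}. f (card (iv l j))) = (\<Sum>a=1..l-1. f (a+1)) + (\<Sum>a=1..n-l. f (a+1))"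
proof -
  have "(\<Sum>j\<in>{1..n} - {l}. f (card (iv l j))) = (\<Sum>j\<in>{1..l-1}. f (card (iv l j))) + (\<Sum>j\<in>{l+1..n}. f (card (iv l j)))"
    unfolding JS_split by (rule sum.union_disjoint) auto
  also have "(\<Sum>j\<in>{1..l-1}. f (card (iv l j))) = (\<Sum>j\<in>{1..l-1}. f (l - j + 1))"
    by (intro sum.cong refl) (auto simp: card_iv)
  also have "\<dots> = (\<Sum>a\<in>{1..l-1}. f (l - (l - 1 + 1 - a) + 1))"
    by (rule sum.atLeastAtMost_rev)
  also have "\<dots> = (\<Sum>a=1..l-1. f (a+1))"
    by (intro sum.cong refl) auto
  also have "(\<Sum>j\<in>{l+1..n}. f (card (iv l j))) = (\<Sum>j\<in>{l+1..n}. f (j - l + 1))"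
    by (intro sum.cong refl) (auto simp: card_iv)
  also have "{l+1..n} = {1 + l..(n - l) + l}" using l by auto
  also have "(\<Sum>j\<in>{1 + l..(n - l) + l}. f (j - l + 1)) = (\<Sum>a\<in>{1..n-l}. f (a + l - l + 1))"
    by (rule sum.shift_bounds_cl_nat_ivl)
  also have "\<dots> = (\<Sum>a=1..n-l. f (a+1))" by simp
  finally show ?thesis .
qed

lemma sum_JS_le:
  fixes f :: "nat \<Rightarrow> real"
  assumes "\<And>a. f a \<ge> 0"
  shows "(\<Sum>j\<in>{1..n} - {l}. f (card (iv l j))) \<le> 2 * (\<Sum>a=1..n. f (a+1))"
proof -
  have "(\<Sum>a=1..l-1. f (a+1)) \<le> (\<Sum>a=1..n. f (a+1))" by (rule sum_mono2) (use assms l in auto)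
  moreover have "(\<Sum>a=1..n-l. f (a+1)) \<le> (\<Sum>a=1..n. f (a+1))" by (rule sum_mono2) (use assms in auto)
  ultimately show ?thesis unfolding sum_JS by simp
qed

lemma lam_ge: "(\<Sum>j\<in>{1..n} - {l}. pj l j) \<ge> ln (real n) - 2"
proof -
  have "(\<Sum>j\<in>{1..n} - {l}. pj l j) = (\<Sum>j\<in>{1..n} - {l}. (\<lambda>c. 1 / real c) (card (iv l j)))"
    by (intro sum.cong refl) (simp add: pj_def[OF l])
  also have "\<dots> = Hp (l - 1) + Hp (n - l)" using sum_JS[of "\<lambda>c. 1 / real c"] by (simp add: Hp_def add_ac)
  also have "\<dots> = harm l + harm (n - l + 1) - 2" using l by (simp add: Hp_harm)
  finally have e: "(\<Sum>j\<in>{1..n} - {l}. pj l j) = harm l + harm (n - l + 1) - 2" .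
  have h1: "ln (real l + 1) \<le> harm l" by (rule ln_le_harm)
  have h2: "ln (real (n - l + 1) + 1) \<le> harm (n - l + 1)" by (rule ln_le_harm)
  have pos: "real l + 1 > 0" "real (n - l + 1) + 1 > 0" by auto
  have "ln (real l + 1) + ln (real (n - l + 1) + 1) = ln ((real l + 1) * (real (n - l + 1) + 1))"
    using pos by (simp add: ln_mult)
  also have "\<dots> \<ge> ln (real n)"
  proof -
    have "real n \<le> (real l + 1) * (real (n - l + 1) + 1)"
    proof -
      obtain m where m: "n = l + m" using l le_Suc_ex by auto
      have "l + m \<le> (l + 1) * (m + 2)" by (simp add: algebra_simps)
      then have "real (l + m) \<le> real ((l + 1) * (m + 2))" by (simp only: of_nat_le_iff)
      then show ?thesis using m by (simp add: algebra_simps)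
    qed
    moreover have "real n > 0" using l by auto
    ultimately show ?thesis by simp
  qed
  finally show ?thesis using e h1 h2 by linarith
qed

lemma T_opp:
  assumes j: "j \<in> {1..n} - {l}" and k: "k \<in> {1..n} - {l}" and o: "opp l j k"
  shows "(pj l j + pj l k) / real (card (iv j k)) - pj l j * pj l k =
    1 / (real (card (iv l j)) * real (card (iv l k)) * (real (card (iv l j)) + real (card (iv l k)) - 1))"
proof -
  define A where "A = real (card (iv l j))"
  define B where "B = real (card (iv l k))"
  have A: "A \<ge> 1" and B: "B \<ge> 1" by (auto simp: A_def B_def card_iv)
  have M: "real (card (iv j k)) = A + B - 1"
    using o j k by (auto simp: A_def B_def card_iv opp_def)
  have "(1 / A + 1 / B) / (A + B - 1) - 1 / A * (1 / B) = 1 / (A * B * (A + B - 1))"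
  proof -
    define C where "C = A + B - 1"
    have p: "A > 0" "B > 0" "C > 0" using A B by (auto simp: C_def)
    have "(1 / A + 1 / B) / C - 1 / A * (1 / B) = (B + A - C) / (A * B * C)"
      using p by (simp add: field_simps)
    also have "B + A - C = 1" by (simp add: C_def)
    finally show ?thesis by (simp add: C_def)
  qed
  then show ?thesis by (simp add: pj_def[OF l] M A_def B_def)
qed

lemma Bd_le: "Bd n l \<le> 6"
proof -
  let ?JS = "{1..n} - {l}"
  let ?t = "\<lambda>A B::nat. 1 / (real A * real B * (real A + real B - 1))"
  have tnn: "?t A B \<ge> 0" if "A \<ge> 1" "B \<ge> 1" for A B using that by auto
  have ivpos: "card (iv l j) \<ge> 1" for j by (simp add: card_iv)
  have P2: "(\<Sum>j\<in>?JS. pj l j ^ 2) \<le> 2"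
  proof -
    have "(\<Sum>j\<in>?JS. pj l j ^ 2) = (\<Sum>j\<in>?JS. (\<lambda>c. 1 / real c ^ 2) (card (iv l j)))"
      by (intro sum.cong refl) (simp add: pj_def[OF l] power_one_over)
    also have "\<dots> \<le> 2 * (\<Sum>a=1..n. 1 / real (a+1) ^ 2)" by (rule sum_JS_le) simp
    also have "\<dots> \<le> 2 * 1" using sq_sum[of n] by (simp add: add.commute)
    finally show ?thesis by simp
  qed
  have inner: "(\<Sum>k\<in>{k \<in> ?JS. opp l j k}. (pj l j + pj l k) / real (card (iv j k)) - pj l j * pj l k)
      \<le> (\<Sum>k\<in>?JS. ?t (card (iv l j)) (card (iv l k)))" if j: "j \<in> ?JS" for j
  proof -
    have "(\<Sum>k\<in>{k \<in> ?JS. opp l j k}. (pj l j + pj l k) / real (card (iv j k)) - pj l j * pj l k)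
        = (\<Sum>k\<in>{k \<in> ?JS. opp l j k}. ?t (card (iv l j)) (card (iv l k)))"
      by (intro sum.cong refl T_opp) (use j in auto)
    also have "\<dots> \<le> (\<Sum>k\<in>?JS. ?t (card (iv l j)) (card (iv l k)))"
    proof (rule sum_mono2)
      fix k
      have "real (card (iv l j)) \<ge> 1" "real (card (iv l k)) \<ge> 1" using ivpos[of j] ivpos[of k] by auto
      then show "0 \<le> ?t (card (iv l j)) (card (iv l k))" by simp
    qed auto
    finally show ?thesis .
  qed
  have X1: "(\<Sum>j\<in>?JS. \<Sum>k\<in>{k \<in> ?JS. opp l j k}. (pj l j + pj l k) / real (card (iv j k)) - pj l j * pj l k)
      \<le> (\<Sum>j\<in>?JS. \<Sum>k\<in>?JS. ?t (card (iv l j)) (card (iv l k)))"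
    by (rule sum_mono) (rule inner)
  have "(\<Sum>j\<in>?JS. \<Sum>k\<in>?JS. ?t (card (iv l j)) (card (iv l k))) \<le> (\<Sum>j\<in>?JS. 2 * (\<Sum>b=1..n. ?t (card (iv l j)) (b+1)))"
  proof (rule sum_mono)
    fix j assume "j \<in> ?JS"
    show "(\<Sum>k\<in>?JS. ?t (card (iv l j)) (card (iv l k))) \<le> 2 * (\<Sum>b=1..n. ?t (card (iv l j)) (b+1))"
    proof (rule sum_JS_le[where f = "\<lambda>B. ?t (card (iv l j)) B"])
      fix b :: nat
      have "real (card (iv l j)) \<ge> 1" using ivpos[of j] by simp
      then show "0 \<le> ?t (card (iv l j)) b" by simp
    qed
  qed
  also have "(\<Sum>j\<in>?JS. 2 * (\<Sum>b=1..n. ?t (card (iv l j)) (b+1))) = 2 * (\<Sum>j\<in>?JS. \<Sum>b=1..n. ?t (card (iv l j)) (b+1))"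
    by (rule sum_distrib_left[symmetric])
  also have "(\<Sum>j\<in>?JS. \<Sum>b=1..n. ?t (card (iv l j)) (b+1)) = (\<Sum>b=1..n. \<Sum>j\<in>?JS. ?t (card (iv l j)) (b+1))"
    by (rule sum.swap)
  finally have X2: "(\<Sum>j\<in>?JS. \<Sum>k\<in>?JS. ?t (card (iv l j)) (card (iv l k))) \<le> 2 * (\<Sum>b=1..n. \<Sum>j\<in>?JS. ?t (card (iv l j)) (b+1))" .
  have "(\<Sum>b=1..n. \<Sum>j\<in>?JS. ?t (card (iv l j)) (b+1)) \<le> (\<Sum>b=1..n. 2 * (\<Sum>a=1..n. ?t (a+1) (b+1)))"
  proof (rule sum_mono)
    fix b
    show "(\<Sum>j\<in>?JS. ?t (card (iv l j)) (b+1)) \<le> 2 * (\<Sum>a=1..n. ?t (a+1) (b+1))"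
      by (rule sum_JS_le[where f = "\<lambda>A. ?t A (b+1)"]) (case_tac a; simp)
  qed
  also have "(\<Sum>b=1..n. 2 * (\<Sum>a=1..n. ?t (a+1) (b+1))) = 2 * (\<Sum>b=1..n. \<Sum>a=1..n. ?t (a+1) (b+1))"
    by (rule sum_distrib_left[symmetric])
  also have "(\<Sum>b=1..n. \<Sum>a=1..n. ?t (a+1) (b+1)) = (\<Sum>a=1..n. \<Sum>b=1..n. ?t (a+1) (b+1))"
    by (rule sum.swap)
  also have "(\<Sum>a=1..n. \<Sum>b=1..n. ?t (a+1) (b+1)) = (\<Sum>a=1..n. \<Sum>b=1..n. 1 / ((real a + 1) * (real b + 1) * (real a + real b + 1)))"
    by (intro sum.cong refl) (simp add: add_ac)
  finally have X3: "(\<Sum>b=1..n. \<Sum>j\<in>?JS. ?t (card (iv l j)) (b+1)) \<le> 2 * (\<Sum>a=1..n. \<Sum>b=1..n. 1 / ((real a + 1) * (real b + 1) * (real a + real b + 1)))" .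
  have Q: "(\<Sum>j\<in>?JS. \<Sum>k\<in>{k \<in> ?JS. opp l j k}. (pj l j + pj l k) / real (card (iv j k)) - pj l j * pj l k) \<le> 4"
    using X1 X2 X3 S_le[of n] by linarith
  show ?thesis unfolding Bd_def[OF l] using P2 Q by simp
qed

end


lemma po_nonneg: "lam \<ge> 0 \<Longrightarrow> po lam k \<ge> 0"
  by (simp add: po_def)

lemma po_sums: "(\<lambda>k. po lam k) sums 1"
proof -
  have "(\<lambda>k. lam ^ k / fact k) sums exp lam"
    using exp_converges[of lam] by (simp add: divide_inverse mult.commute scaleR_conv_of_real)
  then have "(\<lambda>k. lam ^ k / fact k * exp (- lam)) sums (exp lam * exp (- lam))"
    by (rule sums_mult2)
  then show ?thesis by (simp add: po_def exp_minus field_simps)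
qed

context
  fixes n l :: nat
  assumes l: "l \<in> {1..n}"
begin

lemma PS_ne: "permutations_of_set {1..n} \<noteq> {}" by simp

lemma depth_law_eq: "depth_law n l = map_pmf (Wn n l) (pmf_of_set (permutations_of_set {1..n}))"
  unfolding depth_law_def
proof (rule map_pmf_cong[OF refl])
  fix xs assume "xs \<in> set_pmf (pmf_of_set (permutations_of_set {1..n}))"
  then have xs: "xs \<in> permutations_of_set {1..n}" using PS_ne by simp
  then have "distinct xs" "set xs = {1..n}" by (auto simp: permutations_of_set_def)
  then show "key_depth l (bst_of_list xs) = Wn n l xs"
    using depth_anc[of xs l] l by (simp add: Wn_def[OF l])
qed

lemma Wn_le: "Wn n l xs \<le> n"
proof -
  have "Wn n l xs \<le> card {1..n}" unfolding Wn_def[OF l] by (rule card_mono) auto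
  then show ?thesis by simp
qed

lemma expect_eq: "measure_pmf.expectation (depth_law n l) real = (\<Sum>j\<in>{1..n} - {l}. pj l j)"
proof -
  have "measure_pmf.expectation (depth_law n l) real =
      (\<Sum>xs\<in>permutations_of_set {1..n}. real (Wn n l xs)) / card (permutations_of_set {1..n})"
    unfolding depth_law_eq integral_map_pmf by (rule integral_pmf_of_set[OF PS_ne finite_permutations_of_set])
  also have "\<dots> = (\<Sum>j\<in>{1..n} - {l}. pj l j)"
    unfolding lam_eq[OF l] using card_PS by simp
  finally show ?thesis .
qed

lemma sum_pmf_A:
  assumes "finite A"
  shows "(\<Sum>k\<in>A. pmf (depth_law n l) k) =
    (\<Sum>xs\<in>permutations_of_set {1..n}. if Wn n l xs \<in> A then 1 else 0) / card (permutations_of_set {1..n})"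
proof -
  have "(\<Sum>k\<in>A. pmf (depth_law n l) k) = measure (depth_law n l) A"
    by (rule measure_measure_pmf_finite[symmetric]) fact
  also have "\<dots> = card (permutations_of_set {1..n} \<inter> Wn n l -` A) / card (permutations_of_set {1..n})"
    unfolding depth_law_eq measure_map_pmf by (rule measure_pmf_of_set[OF PS_ne finite_permutations_of_set])
  also have "permutations_of_set {1..n} \<inter> Wn n l -` A = {xs \<in> permutations_of_set {1..n}. Wn n l xs \<in> A}" by auto
  also have "real (card \<dots>) = (\<Sum>xs\<in>{xs \<in> permutations_of_set {1..n}. Wn n l xs \<in> A}. 1)" by simp
  also have "\<dots> = (\<Sum>xs\<in>permutations_of_set {1..n}. if Wn n l xs \<in> A then 1 else 0)"
    by (rule sum.inter_filter) simp
  finally show ?thesis .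
qed

lemma pmf_out: "k > n \<Longrightarrow> pmf (depth_law n l) k = 0"
proof -
  assume k: "k > n"
  have nk: "Wn n l xs \<noteq> k" for xs using Wn_le[of xs] k by linarith
  have "(\<Sum>k\<in>{k}. pmf (depth_law n l) k) = 0"
    using sum_pmf_A[of "{k}"] nk by simp
  then show ?thesis by simp
qed

lemma pmf_sums: "(\<lambda>k. pmf (depth_law n l) k) sums 1"
proof -
  have "(\<lambda>k. pmf (depth_law n l) k) sums (\<Sum>k\<in>{0..n}. pmf (depth_law n l) k)"
    by (rule sums_finite) (auto intro: pmf_out)
  also have "(\<Sum>k\<in>{0..n}. pmf (depth_law n l) k) = 1"
    using sum_pmf_A[of "{0..n}"] Wn_le card_PS by simp
  finally show ?thesis .
qed

lemma dTV_main:
  defines "lam \<equiv> (\<Sum>j\<in>{1..n} - {l}. pj l j)"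
  shows "dTV (depth_law n l) (po lam) \<le> 1"
    "lam > 0 \<Longrightarrow> dTV (depth_law n l) (po lam) \<le> 3 / lam * Bd n l"
proof -
  let ?p = "\<lambda>k. pmf (depth_law n l) k" and ?q = "\<lambda>k. po lam k"
  have lam0: "lam \<ge> 0" unfolding lam_def by (rule sum_nonneg) (simp add: pj_def[OF l])
  define A where "A = {k \<in> {0..n}. ?p k > ?q k}"
  have finA: "finite A" by (simp add: A_def)
  have absq: "\<bar>?p k - ?q k\<bar> = 2 * (if k \<in> A then ?p k - ?q k else 0) - (?p k - ?q k)" for k
  proof (cases "k \<in> A")
    case True then show ?thesis by (simp add: A_def)
  next
    case False
    have "?p k \<le> ?q k"
    proof (cases "k \<le> n")
      case True then show ?thesis using False by (auto simp: A_def)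
    next
      case False then show ?thesis using pmf_out[of k] po_nonneg[OF lam0, of k] by simp
    qed
    then show ?thesis using False by simp
  qed
  have s1: "(\<lambda>k. ?p k - ?q k) sums (1 - 1)" by (rule sums_diff[OF pmf_sums po_sums])
  have s2: "(\<lambda>k. if k \<in> A then ?p k - ?q k else 0) sums (\<Sum>k\<in>A. ?p k - ?q k)"
    by (rule sums_If_finite_set[OF finA])
  have "(\<lambda>k. \<bar>?p k - ?q k\<bar>) sums (2 * (\<Sum>k\<in>A. ?p k - ?q k) - (1 - 1))"
    unfolding absq by (intro sums_diff sums_mult s1 s2)
  then have dTV: "dTV (depth_law n l) (po lam) = (\<Sum>k\<in>A. ?p k - ?q k)"
    by (simp add: dTV_def sums_iff)
  have "(\<Sum>k\<in>A. ?p k - ?q k) \<le> (\<Sum>k\<in>A. ?p k)"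
    by (rule sum_mono) (simp add: po_nonneg[OF lam0])
  also have "\<dots> = measure (depth_law n l) A" by (rule measure_measure_pmf_finite[symmetric, OF finA])
  also have "\<dots> \<le> 1" by simp
  finally show "dTV (depth_law n l) (po lam) \<le> 1" using dTV by simp
  assume lpos: "lam > 0"
  define Qa where "Qa = (\<Sum>k\<in>A. ?q k)"
  define h where "h = (\<lambda>i. (if i \<in> A then 1 else 0) - Qa)"
  have Qa0: "Qa \<ge> 0" unfolding Qa_def by (rule sum_nonneg) (simp add: po_nonneg[OF lam0])
  have Qa1: "Qa \<le> 1"
  proof -
    have "Qa \<le> suminf ?q" unfolding Qa_def
      by (rule sum_le_suminf) (use po_sums po_nonneg[OF lam0] finA in \<open>auto simp: sums_iff\<close>)
    then show ?thesis using po_sums by (simp add: sums_iff)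
  qed
  have hb: "\<bar>h i\<bar> \<le> 1" for i using Qa0 Qa1 by (simp add: h_def)
  have s0: "(\<lambda>i. lam ^ i / fact i * h i) sums 0"
  proof -
    have e1: "(\<lambda>i. if i \<in> A then lam ^ i / fact i else 0) sums (\<Sum>i\<in>A. lam ^ i / fact i)"
      by (rule sums_If_finite_set[OF finA])
    have "(\<lambda>i. lam ^ i / fact i) sums exp lam"
      using exp_converges[of lam] by (simp add: divide_inverse mult.commute scaleR_conv_of_real)
    then have e2: "(\<lambda>i. lam ^ i / fact i * Qa) sums (exp lam * Qa)" by (rule sums_mult2)
    have eq: "(\<Sum>i\<in>A. lam ^ i / fact i) = exp lam * Qa"
      unfolding Qa_def po_def by (simp add: sum_distrib_left exp_minus field_simps)
    have "(\<lambda>i. (if i \<in> A then lam ^ i / fact i else 0) - lam ^ i / fact i * Qa) sums (exp lam * Qa - exp lam * Qa)"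
      using sums_diff[OF e1 e2] unfolding eq .
    moreover have "(\<lambda>i. lam ^ i / fact i * h i) = (\<lambda>i. (if i \<in> A then lam ^ i / fact i else 0) - lam ^ i / fact i * Qa)"
      by (rule ext) (simp add: h_def algebra_simps)
    ultimately show ?thesis by simp
  qed
  have main: "(\<Sum>xs\<in>permutations_of_set {1..n}. h (Wn n l xs)) \<le> 3 / lam * card (permutations_of_set {1..n}) * Bd n l"
    using stein_main[OF l, of h] lpos hb s0 unfolding lam_def by simp
  have "(\<Sum>k\<in>A. ?p k - ?q k) = (\<Sum>k\<in>A. ?p k) - Qa" by (simp add: Qa_def sum_subtractf)
  also have "(\<Sum>k\<in>A. ?p k) = (\<Sum>xs\<in>permutations_of_set {1..n}. if Wn n l xs \<in> A then 1 else 0) / card (permutations_of_set {1..n})"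
    by (rule sum_pmf_A[OF finA])
  also have "\<dots> - Qa = (\<Sum>xs\<in>permutations_of_set {1..n}. h (Wn n l xs)) / card (permutations_of_set {1..n})"
    using card_PS by (simp add: h_def sum_subtractf field_simps)
  also have "\<dots> \<le> (3 / lam * card (permutations_of_set {1..n}) * Bd n l) / card (permutations_of_set {1..n})"
    using main card_PS by (intro divide_right_mono) auto
  also have "\<dots> = 3 / lam * Bd n l" using card_PS by simp
  finally show "dTV (depth_law n l) (po lam) \<le> 3 / lam * Bd n l" using dTV by simp
qed

lemma dTV_l:
  assumes n2: "n \<ge> 2"
  shows "dTV (depth_law n l) (po (measure_pmf.expectation (depth_law n l) real)) \<le> (28 + pi\<^sup>2) / ln (real n)"
proof -
  define L where "L = ln (real n)"
  define lam where "lam = (\<Sum>j\<in>{1..n} - {l}. pj l j)"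
  have L0: "L > 0" using n2 by (simp add: L_def)
  have pi0: "pi\<^sup>2 \<ge> 0" by simp
  have E: "measure_pmf.expectation (depth_law n l) real = lam" unfolding lam_def by (rule expect_eq)
  show ?thesis
  proof (cases "L \<le> 28 + pi\<^sup>2")
    case True
    have "dTV (depth_law n l) (po lam) \<le> 1" unfolding lam_def by (rule dTV_main(1))
    also have "1 \<le> (28 + pi\<^sup>2) / L" using True L0 by simp
    finally show ?thesis unfolding E L_def .
  next
    case False
    have lamL: "lam \<ge> L - 2" unfolding lam_def L_def by (rule lam_ge[OF l])
    have lpos: "lam > 0" using lamL False pi0 by linarith
    have Lb: "L - 2 > 0" "L > 28" using False pi0 by linarith+
    have "dTV (depth_law n l) (po lam) \<le> 3 / lam * Bd n l" unfolding lam_def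
      by (rule dTV_main(2)) (use lpos in \<open>simp add: lam_def\<close>)
    also have "\<dots> \<le> 3 / lam * 6" using Bd_le[OF l] lpos by (intro mult_left_mono) auto
    also have "\<dots> = 18 / lam" by simp
    also have "\<dots> \<le> 18 / (L - 2)" using lamL lpos Lb by (intro divide_left_mono) auto
    also have "\<dots> \<le> (28 + pi\<^sup>2) / L"
    proof -
      have "18 * L \<le> (28 + pi\<^sup>2) * (L - 2)"
      proof -
        have "(28 + pi\<^sup>2) * (L - 2) \<ge> 28 * (L - 2)" using Lb pi0 by (intro mult_right_mono) auto
        moreover have "28 * (L - 2) = 28 * L - 56" by simp
        ultimately show ?thesis using Lb by linarith
      qed
      then show ?thesis using Lb L0 by (simp add: divide_simps)
    qed
    finally show ?thesis unfolding E L_def .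
  qed
qed

end

theorem theorem3:
  fixes n :: nat
  assumes "n \<ge> 2"
  shows "(SUP l\<in>{1..n}. dTV (depth_law n l)
            (po (measure_pmf.expectation (depth_law n l) real)))
         \<le> (28 + pi\<^sup>2) / ln (real n)"
proof (rule cSUP_least)
  show "{1..n} \<noteq> {}" using assms by simp
  fix l assume "l \<in> {1..n}"
  then show "dTV (depth_law n l) (po (measure_pmf.expectation (depth_law n l) real)) \<le> (28 + pi\<^sup>2) / ln (real n)"
    using dTV_l assms by blast
qed


end
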